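(* Let $(\mathcal L,[\,,\,])$ be a Lie algebra over a field $\mathbf{k}$, $k\in\mathbf{k}$ nonzero, and $H:=\mathcal U^{6\text{-th}}_k(\mathcal L)$ its enveloping$^{6\text{-th}}$ algebra (constructed in the context), with multiplication $m$, unit map $u$, distinguished idempotent $q$, and with $x\in\mathcal L$ identified with its image in $H$. Define $\sigma:H\to H$ by $\sigma(a):=a+qa-aq$. Then $H$ is a Hopf-like$^{6\text{-th}}$ algebra: there are linear maps $\Delta:H\to H\otimes H$, $\varepsilon:H\to\mathbf{k}$ and $S:H\to H$ such that $H$ with $(m,u,\Delta,\varepsilon,\sigma)$ is a bialgebra with $\sigma$-counit, $S$ is an antipode$^{6\text{-th}}$-like, and $$\Delta(q)=q\otimes q,\quad \Delta(x)=(x+kqx-xq)\otimes1+1\otimes(x+kqx-xq)+(1-k)qx\otimes q+(1-k)q\otimes qx,$$ $$\varepsilon(q)=1,\quad\varepsilon(x)=0,\quad S(q)=1-q,\quad S(x)=-\tfrac1k x-kqx+\tfrac1k xq\qquad(x\in\mathcal L).$$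
   Context: Construction of $H$: take a basis $X=\{x_j\}$ of $\mathcal L$, a symbol $\tilde q\notin X$, $V$ with basis $X\cup\{\tilde q\}$, $I\subseteq T(V)$ the ideal generated by $\tilde q\otimes\tilde q-\tilde q$ and $\tilde q\otimes a\otimes\tilde q-\tilde q\otimes a$ ($a\in T(V)$), $\hat A=T(V)/I$, $\hat q=\tilde q+I$, $x\mapsto\hat x$ the linear extension of $x_j\mapsto x_j+I$; $R$ the ideal of $\hat A$ generated by $\widehat{[x,y]}-\hat x\hat y+\hat y\hat x+\hat x\hat y\hat q-\hat y\hat x\hat q-k\hat x\hat q\hat y+k\hat y\hat q\hat x$ ($x,y\in\mathcal L$); $H=\hat A/R$, $q=\hat q+R$, $x$ denotes $\hat x+R$. Bialgebra with $\sigma$-counit: an associative algebra $H$ over $\mathbf{k}$ with linear maps $m,u,\Delta,\varepsilon,\sigma$ such that $m$ is associative with unit $u(1)$; $\Delta$ is coassociative, $(\Delta\otimes id)\Delta=(id\otimes\Delta)\Delta$; $(\varepsilon\otimes id)\Delta(h)=1\otimes\sigma(h)$ and $(id\otimes\varepsilon)\Delta(h)=\sigma(h)\otimes1$ for all $h$; $\Delta\circ m=(m\otimes m)(id\otimes\tau\otimes id)(\Delta\otimes\Delta)$ and $\Delta(u(1))=u(1)\otimes u(1)$ ($\tau$ the twist $v\otimes w\mapsto w\otimes v$); $\varepsilon(ab)=\varepsilon(a)\varepsilon(b)$ and $\varepsilon(u(1))=1$. It is Hopf-like$^{6\text{-th}}$ if there is a linear $S:H\to H$ (an antipode$^{6\text{-th}}$-like)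 with $m(S\otimes id)\Delta=u\circ\varepsilon\circ S=m(id\otimes S)\Delta$. *)

theory Defs
  imports Complex_Main "HOL-Library.Poly_Mapping"
begin

definition lie_algebra :: "('k::field \<Rightarrow> 'a::ab_group_add \<Rightarrow> 'a) \<Rightarrow> ('a \<Rightarrow> 'a \<Rightarrow> 'a) \<Rightarrow> bool" where
  "lie_algebra scale br \<longleftrightarrow> vector_space scale
     \<and> (\<forall>x y z. br (x + y) z = br x z + br y z)
     \<and> (\<forall>x y z. br x (y + z) = br x y + br x z)
     \<and> (\<forall>c x y. br (scale c x) y = scale c (br x y))
     \<and> (\<forall>c x y. br x (scale c y) = scale c (br x y))
     \<and> (\<forall>x. br x x = 0)
     \<and> (\<forall>x y z. br x (br y z) + br y (br z x) + br z (br x y) = 0)"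

definition smult_pm :: "'k::comm_ring_1 \<Rightarrow> ('w \<Rightarrow>\<^sub>0 'k) \<Rightarrow> ('w \<Rightarrow>\<^sub>0 'k)" where
  "smult_pm c f = Poly_Mapping.map (\<lambda>a. c * a) f"

definition lext :: "('w \<Rightarrow> ('v \<Rightarrow>\<^sub>0 'k::comm_ring_1)) \<Rightarrow> ('w \<Rightarrow>\<^sub>0 'k) \<Rightarrow> ('v \<Rightarrow>\<^sub>0 'k)" where
  "lext \<phi> f = (\<Sum>w\<in>Poly_Mapping.keys f. smult_pm (Poly_Mapping.lookup f w) (\<phi> w))"

definition wd :: "'w \<Rightarrow> ('w \<Rightarrow>\<^sub>0 'k::comm_ring_1)" where
  "wd w = Poly_Mapping.single w 1"

text \<open>Multiplication in the free associative algebra on letters 'l (basis: words,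
product: concatenation).\<close>
definition pmul :: "('l list \<Rightarrow>\<^sub>0 'k::comm_ring_1) \<Rightarrow> ('l list \<Rightarrow>\<^sub>0 'k) \<Rightarrow> ('l list \<Rightarrow>\<^sub>0 'k)" where
  "pmul f g = (\<Sum>u\<in>Poly_Mapping.keys f. \<Sum>v\<in>Poly_Mapping.keys g. Poly_Mapping.single (u @ v) (Poly_Mapping.lookup f u * Poly_Mapping.lookup g v))"

text \<open>Tensor product of elements of free vector spaces (basis of the tensor
product: pairs of basis elements).\<close>
definition tens :: "('u \<Rightarrow>\<^sub>0 'k::comm_ring_1) \<Rightarrow> ('v \<Rightarrow>\<^sub>0 'k) \<Rightarrow> ('u \<times> 'v \<Rightarrow>\<^sub>0 'k)" where
  "tens f g = (\<Sum>u\<in>Poly_Mapping.keys f. \<Sum>v\<in>Poly_Mapping.keys g. Poly_Mapping.single (u, v) (Poly_Mapping.lookup f u * Poly_Mapping.lookup g v))"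

definition tensL :: "('u \<times> 'v \<Rightarrow>\<^sub>0 'k::comm_ring_1) \<Rightarrow> ('w \<Rightarrow>\<^sub>0 'k) \<Rightarrow> ('u \<times> 'v \<times> 'w \<Rightarrow>\<^sub>0 'k)" where
  "tensL f g = (\<Sum>p\<in>Poly_Mapping.keys f. \<Sum>w\<in>Poly_Mapping.keys g. Poly_Mapping.single (fst p, snd p, w) (Poly_Mapping.lookup f p * Poly_Mapping.lookup g w))"

definition pmul2 :: "('l list \<times> 'l list \<Rightarrow>\<^sub>0 'k::comm_ring_1) \<Rightarrow> ('l list \<times> 'l list \<Rightarrow>\<^sub>0 'k)
     \<Rightarrow> ('l list \<times> 'l list \<Rightarrow>\<^sub>0 'k)" where
  "pmul2 f g = (\<Sum>p\<in>Poly_Mapping.keys f. \<Sum>r\<in>Poly_Mapping.keys g.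
       Poly_Mapping.single (fst p @ fst r, snd p @ snd r) (Poly_Mapping.lookup f p * Poly_Mapping.lookup g r))"

inductive_set span_pm :: "('w \<Rightarrow>\<^sub>0 'k::comm_ring_1) set \<Rightarrow> ('w \<Rightarrow>\<^sub>0 'k) set" for S where
  span_pm_zero: "0 \<in> span_pm S"
| span_pm_base: "a \<in> S \<Longrightarrow> a \<in> span_pm S"
| span_pm_add: "a \<in> span_pm S \<Longrightarrow> b \<in> span_pm S \<Longrightarrow> a + b \<in> span_pm S"
| span_pm_smult: "a \<in> span_pm S \<Longrightarrow> smult_pm c a \<in> span_pm S"

inductive_set ideal_gen :: "('l list \<Rightarrow>\<^sub>0 'k::comm_ring_1) set \<Rightarrow> ('l list \<Rightarrow>\<^sub>0 'k) set" for G where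
  ideal_gen_base: "g \<in> G \<Longrightarrow> g \<in> ideal_gen G"
| ideal_gen_zero: "0 \<in> ideal_gen G"
| ideal_gen_add: "a \<in> ideal_gen G \<Longrightarrow> b \<in> ideal_gen G \<Longrightarrow> a + b \<in> ideal_gen G"
| ideal_gen_smult: "a \<in> ideal_gen G \<Longrightarrow> smult_pm c a \<in> ideal_gen G"
| ideal_gen_mult: "a \<in> ideal_gen G \<Longrightarrow> pmul (wd u) (pmul a (wd v)) \<in> ideal_gen G"

text \<open>Letters: Some x for x in L, and None for the symbol q~.  The free algebra F
on these letters, modulo the linearity relations of the letters Some x, is the
tensor algebra T(V) with V = L \<oplus> k q~.  The kernel of F \<rightarrow> H is the ideal
generated by: the linearity relations (giving T(V)), the relations of I, and
(lifts of) the generators of R.\<close>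

definition env6_gens :: "('k::field \<Rightarrow> 'a::ab_group_add \<Rightarrow> 'a) \<Rightarrow> ('a \<Rightarrow> 'a \<Rightarrow> 'a) \<Rightarrow> 'k
     \<Rightarrow> ('a option list \<Rightarrow>\<^sub>0 'k) set" where
  "env6_gens scale br k =
     {wd [Some (x + y)] - wd [Some x] - wd [Some y] | x y. True}
   \<union> {wd [Some (scale c x)] - smult_pm c (wd [Some x]) | c x. True}
   \<union> {wd ([None] @ w @ [None]) - wd ([None] @ w) | w. True}
   \<union> {wd [Some (br x y)] - wd [Some x, Some y] + wd [Some y, Some x]
        + wd [Some x, Some y, None] - wd [Some y, Some x, None]
        - smult_pm k (wd [Some x, None, Some y]) + smult_pm k (wd [Some y, None, Some x]) | x y. True}"

definition env6_ker :: "('k::field \<Rightarrow> 'a::ab_group_add \<Rightarrow> 'a) \<Rightarrow> ('a \<Rightarrow> 'a \<Rightarrow> 'a) \<Rightarrow> 'k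
     \<Rightarrow> ('a option list \<Rightarrow>\<^sub>0 'k) set" where
  "env6_ker scale br k = ideal_gen (env6_gens scale br k)"

text \<open>Kernel of F\<otimes>F \<rightarrow> H\<otimes>H, namely J\<otimes>F + F\<otimes>J.\<close>
definition ker2 :: "('l list \<Rightarrow>\<^sub>0 'k::comm_ring_1) set \<Rightarrow> ('l list \<times> 'l list \<Rightarrow>\<^sub>0 'k) set" where
  "ker2 J = span_pm {tens a b | a b. a \<in> J \<or> b \<in> J}"

text \<open>Kernel of F\<otimes>F\<otimes>F \<rightarrow> H\<otimes>H\<otimes>H.\<close>
definition ker3 :: "('l list \<Rightarrow>\<^sub>0 'k::comm_ring_1) set \<Rightarrow> ('l list \<times> 'l list \<times> 'l list \<Rightarrow>\<^sub>0 'k) set" where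
  "ker3 J = span_pm {tens a (tens b c) | a b c. a \<in> J \<or> b \<in> J \<or> c \<in> J}"

abbreviation one6 :: "('a option list \<Rightarrow>\<^sub>0 'k::comm_ring_1)" where "one6 \<equiv> wd []"
abbreviation q6 :: "('a option list \<Rightarrow>\<^sub>0 'k::comm_ring_1)" where "q6 \<equiv> wd [None]"
abbreviation lie6 :: "'a \<Rightarrow> ('a option list \<Rightarrow>\<^sub>0 'k::comm_ring_1)" where "lie6 x \<equiv> wd [Some x]"

definition sigma6 :: "('a option list \<Rightarrow>\<^sub>0 'k::comm_ring_1) \<Rightarrow> ('a option list \<Rightarrow>\<^sub>0 'k)" where
  "sigma6 a = a + pmul q6 a - pmul a q6"

text \<open>All maps on H, H\<otimes>H are given by linear lifts on F resp. F\<otimes>F that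
respect the kernels; identities in H (resp. H\<otimes>H, H\<otimes>H\<otimes>H) are congruences
modulo J (resp. ker2 J, ker3 J).  Maps D, e, S, s are lifts of \<Delta>, \<epsilon>, S, \<sigma>.\<close>

definition well_defined_maps :: "('l list \<Rightarrow>\<^sub>0 'k::field) set
     \<Rightarrow> (('l list \<Rightarrow>\<^sub>0 'k) \<Rightarrow> ('l list \<times> 'l list \<Rightarrow>\<^sub>0 'k)) \<Rightarrow> (('l list \<Rightarrow>\<^sub>0 'k) \<Rightarrow> 'k)
     \<Rightarrow> (('l list \<Rightarrow>\<^sub>0 'k) \<Rightarrow> ('l list \<Rightarrow>\<^sub>0 'k)) \<Rightarrow> bool" where
  "well_defined_maps J D e S \<longleftrightarrow>
     Vector_Spaces.linear smult_pm smult_pm D \<and> Vector_Spaces.linear smult_pm (*) e \<and> Vector_Spaces.linear smult_pm smult_pm S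
   \<and> (\<forall>a\<in>J. D a \<in> ker2 J) \<and> (\<forall>a\<in>J. e a = 0) \<and> (\<forall>a\<in>J. S a \<in> J)"

definition bialgebra_sigma_counit :: "('l list \<Rightarrow>\<^sub>0 'k::field) set
     \<Rightarrow> (('l list \<Rightarrow>\<^sub>0 'k) \<Rightarrow> ('l list \<times> 'l list \<Rightarrow>\<^sub>0 'k)) \<Rightarrow> (('l list \<Rightarrow>\<^sub>0 'k) \<Rightarrow> 'k)
     \<Rightarrow> (('l list \<Rightarrow>\<^sub>0 'k) \<Rightarrow> ('l list \<Rightarrow>\<^sub>0 'k)) \<Rightarrow> bool" where
  "bialgebra_sigma_counit J D e s \<longleftrightarrow>
     \<comment> \<open>m associative with unit u(1)\<close>
     (\<forall>a b c. pmul (pmul a b) c - pmul a (pmul b c) \<in> J)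
   \<and> (\<forall>a. pmul (wd []) a - a \<in> J \<and> pmul a (wd []) - a \<in> J)
     \<comment> \<open>coassociativity (\<Delta>\<otimes>id)\<Delta> = (id\<otimes>\<Delta>)\<Delta>\<close>
   \<and> (\<forall>h. lext (\<lambda>(u, v). tensL (D (wd u)) (wd v)) (D h)
           - lext (\<lambda>(u, v). tens (wd u) (D (wd v))) (D h) \<in> ker3 J)
     \<comment> \<open>\<sigma>-counit: (\<epsilon>\<otimes>id)\<Delta>(h) = 1\<otimes>\<sigma>(h), (id\<otimes>\<epsilon>)\<Delta>(h) = \<sigma>(h)\<otimes>1\<close>
   \<and> (\<forall>h. lext (\<lambda>(u, v). smult_pm (e (wd u)) (wd v)) (D h) - s h \<in> J)
   \<and> (\<forall>h. lext (\<lambda>(u, v). smult_pm (e (wd v)) (wd u)) (D h) - s h \<in> J)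
     \<comment> \<open>\<Delta> multiplicative and unital\<close>
   \<and> (\<forall>a b. D (pmul a b) - pmul2 (D a) (D b) \<in> ker2 J)
   \<and> D (wd []) - tens (wd []) (wd []) \<in> ker2 J
     \<comment> \<open>\<epsilon> multiplicative and unital\<close>
   \<and> (\<forall>a b. e (pmul a b) = e a * e b)
   \<and> e (wd []) = 1"

definition antipode6_like :: "('l list \<Rightarrow>\<^sub>0 'k::field) set
     \<Rightarrow> (('l list \<Rightarrow>\<^sub>0 'k) \<Rightarrow> ('l list \<times> 'l list \<Rightarrow>\<^sub>0 'k)) \<Rightarrow> (('l list \<Rightarrow>\<^sub>0 'k) \<Rightarrow> 'k)
     \<Rightarrow> (('l list \<Rightarrow>\<^sub>0 'k) \<Rightarrow> ('l list \<Rightarrow>\<^sub>0 'k)) \<Rightarrow> bool" where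
  "antipode6_like J D e S \<longleftrightarrow>
     (\<forall>h. lext (\<lambda>(u, v). pmul (S (wd u)) (wd v)) (D h) - smult_pm (e (S h)) (wd []) \<in> J)
   \<and> (\<forall>h. lext (\<lambda>(u, v). pmul (wd u) (S (wd v))) (D h) - smult_pm (e (S h)) (wd []) \<in> J)"

end

theory Submission
  imports Defs
begin

lemma lookup_smult [simp]: "Poly_Mapping.lookup (smult_pm c f) w = c * Poly_Mapping.lookup f w"
  unfolding smult_pm_def by (simp add: Poly_Mapping.map.rep_eq when_def)

lemma smult_single [simp]: "smult_pm c (Poly_Mapping.single w d) = Poly_Mapping.single w (c * d)"
  by (rule poly_mapping_eqI) (simp add: lookup_single when_def)

lemma smult_add_right: "smult_pm c (f + g) = smult_pm c f + smult_pm c g"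
  by (rule poly_mapping_eqI) (simp add: lookup_add algebra_simps)
lemma smult_add_left: "smult_pm (c + d) f = smult_pm c f + smult_pm d f"
  by (rule poly_mapping_eqI) (simp add: lookup_add algebra_simps)
lemma smult_diff_right: "smult_pm c (f - g) = smult_pm c f - smult_pm c g"
  by (rule poly_mapping_eqI) (simp add: lookup_minus algebra_simps)
lemma smult_diff_left: "smult_pm (c - d) f = smult_pm c f - smult_pm d f"
  by (rule poly_mapping_eqI) (simp add: lookup_minus algebra_simps)
lemma smult_minus_right: "smult_pm c (- f) = - smult_pm c f"
  by (rule poly_mapping_eqI) (simp)
lemma smult_minus_left: "smult_pm (- c) f = - smult_pm c f"
  by (rule poly_mapping_eqI) (simp)
lemma smult_smult [simp]: "smult_pm c (smult_pm d f) = smult_pm (c * d) f"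
  by (rule poly_mapping_eqI) (simp add: algebra_simps)
lemma smult_one [simp]: "smult_pm 1 f = f"
  by (rule poly_mapping_eqI) (simp)
lemma smult_zero_left [simp]: "smult_pm 0 f = 0"
  by (rule poly_mapping_eqI) (simp)
lemma smult_zero_right [simp]: "smult_pm c 0 = 0"
  by (rule poly_mapping_eqI) (simp)
lemma smult_sum: "smult_pm c (sum g A) = (\<Sum>i\<in>A. smult_pm c (g i))"
  by (induction A rule: infinite_finite_induct) (simp_all add: smult_add_right)

lemma wd_single: "wd w = Poly_Mapping.single w 1"
  by (simp add: wd_def)

lemma pm_expansion: "f = (\<Sum>w\<in>Poly_Mapping.keys f. Poly_Mapping.single w (Poly_Mapping.lookup f w))"
proof -
  have *: "finite I
        \<Longrightarrow> Poly_Mapping.lookup (\<Sum>i\<in>I. Poly_Mapping.single i (Poly_Mapping.lookup f i)) j =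
            (if j \<in> I then Poly_Mapping.lookup f j else 0)" for I j
    by (induction I rule: finite_induct) (auto simp: lookup_single lookup_add when_def)
  show ?thesis
    by (rule poly_mapping_eqI) (fastforce simp add: in_keys_iff *)
qed

lemma pm_induct [case_names zero single add]:
  assumes "P 0" "\<And>w c. P (Poly_Mapping.single w c)" "\<And>a b. P a \<Longrightarrow> P b \<Longrightarrow> P (a + b)"
  shows "P (f :: 'a \<Rightarrow>\<^sub>0 'b::comm_monoid_add)"
proof -
  have "P (\<Sum>w\<in>I. Poly_Mapping.single w (Poly_Mapping.lookup f w))" if "finite I" for I
    using that by (induction I rule: finite_induct) (auto intro: assms)
  then show ?thesis by (subst pm_expansion) simp
qed

lemma lext_superset:
  assumes "finite A" "Poly_Mapping.keys f \<subseteq> A"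
  shows "lext \<phi> f = (\<Sum>w\<in>A. smult_pm (Poly_Mapping.lookup f w) (\<phi> w))"
  unfolding lext_def using assms
  by (intro sum.mono_neutral_left) (auto simp: in_keys_iff)

lemma lext_zero [simp]: "lext \<phi> 0 = 0"
  by (simp add: lext_def)

lemma lext_single [simp]: "lext \<phi> (Poly_Mapping.single w c) = smult_pm c (\<phi> w)"
  by (subst lext_superset[of "{w}"]) auto

lemma lext_wd [simp]: "lext \<phi> (wd w) = \<phi> w"
  by (simp add: wd_single)

lemma lext_add: "lext \<phi> (f + g) = lext \<phi> f + lext \<phi> g"
proof -
  let ?A = "Poly_Mapping.keys f \<union> Poly_Mapping.keys g"
  have "lext \<phi> (f + g) = (\<Sum>w\<in>?A. smult_pm (Poly_Mapping.lookup (f+g) w) (\<phi> w))"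
    by (rule lext_superset) (auto simp: keys_add)
  also have "\<dots> = (\<Sum>w\<in>?A. smult_pm (Poly_Mapping.lookup f w) (\<phi> w)) + (\<Sum>w\<in>?A. smult_pm (Poly_Mapping.lookup g w) (\<phi> w))"
    by (simp add: lookup_add smult_add_left sum.distrib)
  also have "\<dots> = lext \<phi> f + lext \<phi> g"
    by (simp add: lext_superset[symmetric])
  finally show ?thesis .
qed

lemma lext_smult: "lext \<phi> (smult_pm c f) = smult_pm c (lext \<phi> f)"
  by (induction f rule: pm_induct) (simp_all add: lext_add smult_add_right)

lemma lext_minus: "lext \<phi> (- f) = - lext \<phi> f"
  using lext_smult[of \<phi> "-1" f] by (simp add: smult_minus_left)

lemma lext_diff: "lext \<phi> (f - g) = lext \<phi> f - lext \<phi> g"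
  using lext_add[of \<phi> f "-g"] by (simp add: lext_minus)

lemma lext_sum: "lext \<phi> (sum g A) = (\<Sum>i\<in>A. lext \<phi> (g i))"
  by (induction A rule: infinite_finite_induct) (simp_all add: lext_add)

lemma lext_cong: "(\<And>w. \<phi> w = \<psi> w) \<Longrightarrow> lext \<phi> f = lext \<psi> f"
  by (simp add: lext_def)

lemma lext_fun_add: "lext (\<lambda>w. \<phi> w + \<psi> w) f = lext \<phi> f + lext \<psi> f"
  by (induction f rule: pm_induct) (simp_all add: lext_add smult_add_right algebra_simps)

definition bil :: "('u \<Rightarrow> 'v \<Rightarrow> ('w \<Rightarrow>\<^sub>0 'k::comm_ring_1)) \<Rightarrow> ('u \<Rightarrow>\<^sub>0 'k) \<Rightarrow> ('v \<Rightarrow>\<^sub>0 'k) \<Rightarrow> ('w \<Rightarrow>\<^sub>0 'k)" where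
  "bil \<phi> f g = lext (\<lambda>u. lext (\<lambda>v. \<phi> u v) g) f"

lemma bil_add_left: "bil \<phi> (f + f') g = bil \<phi> f g + bil \<phi> f' g"
  by (simp add: bil_def lext_add)
lemma bil_add_right: "bil \<phi> f (g + g') = bil \<phi> f g + bil \<phi> f g'"
  by (simp add: bil_def lext_add lext_fun_add)
lemma bil_smult_left: "bil \<phi> (smult_pm c f) g = smult_pm c (bil \<phi> f g)"
  by (simp add: bil_def lext_smult)
lemma bil_smult_right: "bil \<phi> f (smult_pm c g) = smult_pm c (bil \<phi> f g)"
  unfolding bil_def lext_smult
  by (induction f rule: pm_induct) (simp_all add: lext_add smult_add_right algebra_simps)
lemma bil_zero_left [simp]: "bil \<phi> 0 g = 0"
  by (simp add: bil_def)
lemma bil_zero_right [simp]: "bil \<phi> f 0 = 0"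
  using bil_smult_right[of \<phi> f 0 0] by simp
lemma bil_minus_left: "bil \<phi> (- f) g = - bil \<phi> f g"
  by (simp add: bil_def lext_minus)
lemma bil_minus_right: "bil \<phi> f (- g) = - bil \<phi> f g"
  using bil_smult_right[of \<phi> f "-1" g] by (simp add: smult_minus_left)
lemma bil_diff_left: "bil \<phi> (f - f') g = bil \<phi> f g - bil \<phi> f' g"
  using bil_add_left[of \<phi> f "-f'" g] by (simp add: bil_minus_left)
lemma bil_diff_right: "bil \<phi> f (g - g') = bil \<phi> f g - bil \<phi> f g'"
  using bil_add_right[of \<phi> f g "-g'"] by (simp add: bil_minus_right)
lemma bil_single [simp]: "bil \<phi> (Poly_Mapping.single u a) (Poly_Mapping.single v b) = smult_pm (a * b) (\<phi> u v)"
  by (simp add: bil_def)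

lemma sum_single_bil:
  "(\<Sum>u\<in>Poly_Mapping.keys f. \<Sum>v\<in>Poly_Mapping.keys g. Poly_Mapping.single (h u v) (Poly_Mapping.lookup f u * Poly_Mapping.lookup g v))
   = bil (\<lambda>u v. Poly_Mapping.single (h u v) 1) f g"
  by (simp add: bil_def lext_def smult_sum mult.commute)

lemma pmul_bil: "pmul f g = bil (\<lambda>u v. Poly_Mapping.single (u @ v) 1) f g"
  unfolding pmul_def by (rule sum_single_bil)
lemma tens_bil: "tens f g = bil (\<lambda>u v. Poly_Mapping.single (u, v) 1) f g"
  unfolding tens_def by (rule sum_single_bil)
lemma tensL_bil: "tensL f g = bil (\<lambda>u v. Poly_Mapping.single (fst u, snd u, v) 1) f g"
  unfolding tensL_def by (rule sum_single_bil)
lemma pmul2_bil: "pmul2 f g = bil (\<lambda>u v. Poly_Mapping.single (fst u @ fst v, snd u @ snd v) 1) f g"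
  unfolding pmul2_def by (rule sum_single_bil)


lemma pmul_single [simp]: "pmul (Poly_Mapping.single u a) (Poly_Mapping.single v b) = Poly_Mapping.single (u @ v) (a * b)"
  by (simp add: pmul_bil)
lemma tens_single [simp]: "tens (Poly_Mapping.single u a) (Poly_Mapping.single v b) = Poly_Mapping.single (u, v) (a * b)"
  by (simp add: tens_bil)
lemma tensL_single [simp]: "tensL (Poly_Mapping.single u a) (Poly_Mapping.single v b) = Poly_Mapping.single (fst u, snd u, v) (a * b)"
  by (simp add: tensL_bil)
lemma pmul2_single [simp]: "pmul2 (Poly_Mapping.single u a) (Poly_Mapping.single v b) = Poly_Mapping.single (fst u @ fst v, snd u @ snd v) (a * b)"
  by (simp add: pmul2_bil)

lemma pmul_add_left: "pmul (f + f') g = pmul f g + pmul f' g"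
  unfolding pmul_bil by (rule bil_add_left)
lemma pmul_add_right: "pmul f (g + g') = pmul f g + pmul f g'"
  unfolding pmul_bil by (rule bil_add_right)
lemma pmul_diff_left: "pmul (f - f') g = pmul f g - pmul f' g"
  unfolding pmul_bil by (rule bil_diff_left)
lemma pmul_diff_right: "pmul f (g - g') = pmul f g - pmul f g'"
  unfolding pmul_bil by (rule bil_diff_right)
lemma pmul_minus_left: "pmul (- f) g = - pmul f g"
  unfolding pmul_bil by (rule bil_minus_left)
lemma pmul_minus_right: "pmul f (- g) = - pmul f g"
  unfolding pmul_bil by (rule bil_minus_right)
lemma pmul_smult_left: "pmul (smult_pm c f) g = smult_pm c (pmul f g)"
  unfolding pmul_bil by (rule bil_smult_left)
lemma pmul_smult_right: "pmul f (smult_pm c g) = smult_pm c (pmul f g)"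
  unfolding pmul_bil by (rule bil_smult_right)
lemma pmul_zero_left [simp]: "pmul 0 g = 0"
  unfolding pmul_bil by (rule bil_zero_left)
lemma pmul_zero_right [simp]: "pmul f 0 = 0"
  unfolding pmul_bil by (rule bil_zero_right)

lemma tens_add_left: "tens (f + f') g = tens f g + tens f' g"
  unfolding tens_bil by (rule bil_add_left)
lemma tens_add_right: "tens f (g + g') = tens f g + tens f g'"
  unfolding tens_bil by (rule bil_add_right)
lemma tens_diff_left: "tens (f - f') g = tens f g - tens f' g"
  unfolding tens_bil by (rule bil_diff_left)
lemma tens_diff_right: "tens f (g - g') = tens f g - tens f g'"
  unfolding tens_bil by (rule bil_diff_right)
lemma tens_minus_left: "tens (- f) g = - tens f g"
  unfolding tens_bil by (rule bil_minus_left)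
lemma tens_minus_right: "tens f (- g) = - tens f g"
  unfolding tens_bil by (rule bil_minus_right)
lemma tens_smult_left: "tens (smult_pm c f) g = smult_pm c (tens f g)"
  unfolding tens_bil by (rule bil_smult_left)
lemma tens_smult_right: "tens f (smult_pm c g) = smult_pm c (tens f g)"
  unfolding tens_bil by (rule bil_smult_right)
lemma tens_zero_left [simp]: "tens 0 g = 0"
  unfolding tens_bil by (rule bil_zero_left)
lemma tens_zero_right [simp]: "tens f 0 = 0"
  unfolding tens_bil by (rule bil_zero_right)

lemma tensL_add_left: "tensL (f + f') g = tensL f g + tensL f' g"
  unfolding tensL_bil by (rule bil_add_left)
lemma tensL_add_right: "tensL f (g + g') = tensL f g + tensL f g'"
  unfolding tensL_bil by (rule bil_add_right)
lemma tensL_smult_left: "tensL (smult_pm c f) g = smult_pm c (tensL f g)"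
  unfolding tensL_bil by (rule bil_smult_left)
lemma tensL_smult_right: "tensL f (smult_pm c g) = smult_pm c (tensL f g)"
  unfolding tensL_bil by (rule bil_smult_right)
lemma tensL_zero_left [simp]: "tensL 0 g = 0"
  unfolding tensL_bil by (rule bil_zero_left)
lemma tensL_zero_right [simp]: "tensL f 0 = 0"
  unfolding tensL_bil by (rule bil_zero_right)
lemma tensL_diff_left: "tensL (f - f') g = tensL f g - tensL f' g"
  unfolding tensL_bil by (rule bil_diff_left)
lemma tensL_diff_right: "tensL f (g - g') = tensL f g - tensL f g'"
  unfolding tensL_bil by (rule bil_diff_right)

lemma pmul2_add_left: "pmul2 (f + f') g = pmul2 f g + pmul2 f' g"
  unfolding pmul2_bil by (rule bil_add_left)
lemma pmul2_add_right: "pmul2 f (g + g') = pmul2 f g + pmul2 f g'"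
  unfolding pmul2_bil by (rule bil_add_right)
lemma pmul2_diff_left: "pmul2 (f - f') g = pmul2 f g - pmul2 f' g"
  unfolding pmul2_bil by (rule bil_diff_left)
lemma pmul2_diff_right: "pmul2 f (g - g') = pmul2 f g - pmul2 f g'"
  unfolding pmul2_bil by (rule bil_diff_right)
lemma pmul2_smult_left: "pmul2 (smult_pm c f) g = smult_pm c (pmul2 f g)"
  unfolding pmul2_bil by (rule bil_smult_left)
lemma pmul2_smult_right: "pmul2 f (smult_pm c g) = smult_pm c (pmul2 f g)"
  unfolding pmul2_bil by (rule bil_smult_right)
lemma pmul2_zero_left [simp]: "pmul2 0 g = 0"
  unfolding pmul2_bil by (rule bil_zero_left)
lemma pmul2_zero_right [simp]: "pmul2 f 0 = 0"
  unfolding pmul2_bil by (rule bil_zero_right)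

definition pmul3 :: "('l list \<times> 'l list \<times> 'l list \<Rightarrow>\<^sub>0 'k::comm_ring_1) \<Rightarrow> ('l list \<times> 'l list \<times> 'l list \<Rightarrow>\<^sub>0 'k) \<Rightarrow> ('l list \<times> 'l list \<times> 'l list \<Rightarrow>\<^sub>0 'k)" where
  "pmul3 = bil (\<lambda>u v. Poly_Mapping.single (fst u @ fst v, fst (snd u) @ fst (snd v), snd (snd u) @ snd (snd v)) 1)"

lemma pmul3_single [simp]: "pmul3 (Poly_Mapping.single (a,b,c) x) (Poly_Mapping.single (a',b',c') y) = Poly_Mapping.single (a@a',b@b',c@c') (x*y)"
  by (simp add: pmul3_def)
lemma pmul3_zero_left [simp]: "pmul3 0 g = 0"
  unfolding pmul3_def by (rule bil_zero_left)
lemma pmul3_zero_right [simp]: "pmul3 f 0 = 0"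
  unfolding pmul3_def by (rule bil_zero_right)
lemma pmul3_add_left: "pmul3 (f + f') g = pmul3 f g + pmul3 f' g"
  unfolding pmul3_def by (rule bil_add_left)
lemma pmul3_add_right: "pmul3 f (g + g') = pmul3 f g + pmul3 f g'"
  unfolding pmul3_def by (rule bil_add_right)
lemma pmul3_diff_left: "pmul3 (f - f') g = pmul3 f g - pmul3 f' g"
  unfolding pmul3_def by (rule bil_diff_left)
lemma pmul3_diff_right: "pmul3 f (g - g') = pmul3 f g - pmul3 f g'"
  unfolding pmul3_def by (rule bil_diff_right)
lemma pmul3_smult_left: "pmul3 (smult_pm c f) g = smult_pm c (pmul3 f g)"
  unfolding pmul3_def by (rule bil_smult_left)
lemma pmul3_smult_right: "pmul3 f (smult_pm c g) = smult_pm c (pmul3 f g)"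
  unfolding pmul3_def by (rule bil_smult_right)

lemma pmul_assoc: "pmul (pmul f g) h = pmul f (pmul g h)"
proof (induction f rule: pm_induct)
  case (single w1 c1)
  then show ?case
  proof (induction g rule: pm_induct)
    case (single w2 c2)
    then show ?case by (induction h rule: pm_induct) (simp_all add: pmul_add_right mult.assoc)
  qed (simp_all add: pmul_add_left pmul_add_right)
qed (simp_all add: pmul_add_left)

lemma pmul_one_left [simp]: "pmul (wd []) f = f"
  by (induction f rule: pm_induct) (simp_all add: wd_single pmul_add_right)
lemma pmul_one_right [simp]: "pmul f (wd []) = f"
  by (induction f rule: pm_induct) (simp_all add: wd_single pmul_add_left)

lemma pmul2_tens_single: "pmul2 (tens a b) (Poly_Mapping.single (u,v) x) = tens (pmul a (Poly_Mapping.single u x)) (pmul b (wd v))"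
proof (induction a rule: pm_induct)
  case (single w c)
  then show ?case by (induction b rule: pm_induct) (simp_all add: pmul2_add_left tens_add_right pmul_add_left wd_single mult_ac)
qed (simp_all add: pmul2_add_left tens_add_left pmul_add_left)

lemma pmul2_single_tens: "pmul2 (Poly_Mapping.single (u,v) x) (tens a b) = tens (pmul (Poly_Mapping.single u x) a) (pmul (wd v) b)"
proof (induction a rule: pm_induct)
  case (single w c)
  then show ?case by (induction b rule: pm_induct) (simp_all add: pmul2_add_right tens_add_right pmul_add_right wd_single mult_ac)
qed (simp_all add: pmul2_add_right tens_add_left pmul_add_right)

lemma pmul3_tens_single: "pmul3 (tens a (tens b c)) (Poly_Mapping.single (u,v,w) x) = tens (pmul a (Poly_Mapping.single u x)) (tens (pmul b (wd v)) (pmul c (wd w)))"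
proof (induction a rule: pm_induct)
  case (single w1 c1)
  then show ?case
  proof (induction b rule: pm_induct)
    case (single w2 c2)
    then show ?case by (induction c rule: pm_induct) (simp_all add: pmul3_add_left tens_add_right pmul_add_left wd_single mult_ac)
  qed (simp_all add: pmul3_add_left tens_add_left tens_add_right pmul_add_left)
qed (simp_all add: pmul3_add_left tens_add_left pmul_add_left)

lemma pmul3_single_tens: "pmul3 (Poly_Mapping.single (u,v,w) x) (tens a (tens b c)) = tens (pmul (Poly_Mapping.single u x) a) (tens (pmul (wd v) b) (pmul (wd w) c))"
proof (induction a rule: pm_induct)
  case (single w1 c1)
  then show ?case
  proof (induction b rule: pm_induct)
    case (single w2 c2)
    then show ?case by (induction c rule: pm_induct) (simp_all add: pmul3_add_right tens_add_right pmul_add_right wd_single mult_ac)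
  qed (simp_all add: pmul3_add_right tens_add_left tens_add_right pmul_add_right)
qed (simp_all add: pmul3_add_right tens_add_left pmul_add_right)


lemma ig_minus: "a \<in> ideal_gen G \<Longrightarrow> - a \<in> ideal_gen G"
  using ideal_gen_smult[of a G "-1"] by (simp add: smult_minus_left)
lemma ig_diff: "a \<in> ideal_gen G \<Longrightarrow> b \<in> ideal_gen G \<Longrightarrow> a - b \<in> ideal_gen G"
  using ideal_gen_add[OF _ ig_minus] by (metis diff_conv_add_uminus)
lemma ig_sum: "(\<And>i. i \<in> A \<Longrightarrow> f i \<in> ideal_gen G) \<Longrightarrow> sum f A \<in> ideal_gen G"
  by (induction A rule: infinite_finite_induct) (auto intro: ideal_gen.intros)

lemma ig_mul_wd: "a \<in> ideal_gen G \<Longrightarrow> pmul (wd u) (pmul a (wd v)) \<in> ideal_gen G"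
  by (rule ideal_gen_mult)

lemma ig_mul_left: assumes "a \<in> ideal_gen G" shows "pmul f a \<in> ideal_gen G"
proof (induction f rule: pm_induct)
  case (single w c)
  have "pmul (wd w) (pmul a (wd [])) \<in> ideal_gen G" by (rule ideal_gen_mult[OF assms])
  then have "smult_pm c (pmul (wd w) a) \<in> ideal_gen G" by (simp add: ideal_gen_smult)
  then show ?case by (simp add: wd_single pmul_smult_left[symmetric])
qed (auto simp: pmul_add_left intro: ideal_gen.intros)

lemma ig_mul_right: assumes "a \<in> ideal_gen G" shows "pmul a f \<in> ideal_gen G"
proof (induction f rule: pm_induct)
  case (single w c)
  have "pmul (wd []) (pmul a (wd w)) \<in> ideal_gen G" by (rule ideal_gen_mult[OF assms])
  then have "smult_pm c (pmul a (wd w)) \<in> ideal_gen G" by (simp add: ideal_gen_smult)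
  then show ?case by (simp add: wd_single pmul_smult_right[symmetric])
qed (auto simp: pmul_add_right intro: ideal_gen.intros)

lemma ig_mul_both: "a \<in> ideal_gen G \<Longrightarrow> pmul f (pmul a g) \<in> ideal_gen G"
  by (intro ig_mul_left ig_mul_right)

lemma span_minus: "a \<in> span_pm S \<Longrightarrow> - a \<in> span_pm S"
  using span_pm_smult[of a S "-1"] by (simp add: smult_minus_left)
lemma span_diff: "a \<in> span_pm S \<Longrightarrow> b \<in> span_pm S \<Longrightarrow> a - b \<in> span_pm S"
  using span_pm_add[OF _ span_minus] by (metis diff_conv_add_uminus)
lemma span_sum: "(\<And>i. i \<in> A \<Longrightarrow> f i \<in> span_pm S) \<Longrightarrow> sum f A \<in> span_pm S"
  by (induction A rule: infinite_finite_induct) (auto intro: span_pm.intros)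

lemma ker2_tens_left: "a \<in> J \<Longrightarrow> tens a b \<in> ker2 J"
  unfolding ker2_def by (rule span_pm_base) blast
lemma ker2_tens_right: "b \<in> J \<Longrightarrow> tens a b \<in> ker2 J"
  unfolding ker2_def by (rule span_pm_base) blast
lemma ker2_add: "a \<in> ker2 J \<Longrightarrow> b \<in> ker2 J \<Longrightarrow> a + b \<in> ker2 J"
  unfolding ker2_def by (rule span_pm_add)
lemma ker2_diff: "a \<in> ker2 J \<Longrightarrow> b \<in> ker2 J \<Longrightarrow> a - b \<in> ker2 J"
  unfolding ker2_def by (rule span_diff)
lemma ker2_smult: "a \<in> ker2 J \<Longrightarrow> smult_pm c a \<in> ker2 J"
  unfolding ker2_def by (rule span_pm_smult)
lemma ker2_zero: "0 \<in> ker2 J"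
  unfolding ker2_def by (rule span_pm_zero)
lemma ker2_minus: "a \<in> ker2 J \<Longrightarrow> - a \<in> ker2 J"
  unfolding ker2_def by (rule span_minus)

lemma ker3_tens1: "a \<in> J \<Longrightarrow> tens a (tens b c) \<in> ker3 J"
  unfolding ker3_def by (rule span_pm_base) blast
lemma ker3_tens2: "b \<in> J \<Longrightarrow> tens a (tens b c) \<in> ker3 J"
  unfolding ker3_def by (rule span_pm_base) blast
lemma ker3_tens3: "c \<in> J \<Longrightarrow> tens a (tens b c) \<in> ker3 J"
  unfolding ker3_def by (rule span_pm_base) blast
lemma ker3_add: "a \<in> ker3 J \<Longrightarrow> b \<in> ker3 J \<Longrightarrow> a + b \<in> ker3 J"
  unfolding ker3_def by (rule span_pm_add)
lemma ker3_diff: "a \<in> ker3 J \<Longrightarrow> b \<in> ker3 J \<Longrightarrow> a - b \<in> ker3 J"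
  unfolding ker3_def by (rule span_diff)
lemma ker3_smult: "a \<in> ker3 J \<Longrightarrow> smult_pm c a \<in> ker3 J"
  unfolding ker3_def by (rule span_pm_smult)
lemma ker3_zero: "0 \<in> ker3 J"
  unfolding ker3_def by (rule span_pm_zero)

lemma ker2_mul_right:
  assumes "X \<in> ker2 (ideal_gen G)" shows "pmul2 X Y \<in> ker2 (ideal_gen G)"
  using assms unfolding ker2_def
proof (induction X rule: span_pm.induct)
  case (span_pm_base a)
  then obtain x y where a: "a = tens x y" and xy: "x \<in> ideal_gen G \<or> y \<in> ideal_gen G" by blast
  show ?case unfolding a
  proof (induction Y rule: pm_induct)
    case (single w c)
    obtain u v where w: "w = (u, v)" by (cases w)
    show ?case unfolding w pmul2_tens_single
      by (rule span_pm.span_pm_base) (use xy in \<open>blast intro: ig_mul_right ig_mul_left\<close>)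
  qed (auto simp: pmul2_add_right intro: span_pm.intros)
qed (auto simp: pmul2_add_left pmul2_smult_left intro: span_pm.intros)

lemma ker2_mul_left:
  assumes "X \<in> ker2 (ideal_gen G)" shows "pmul2 Y X \<in> ker2 (ideal_gen G)"
  using assms unfolding ker2_def
proof (induction X rule: span_pm.induct)
  case (span_pm_base a)
  then obtain x y where a: "a = tens x y" and xy: "x \<in> ideal_gen G \<or> y \<in> ideal_gen G" by blast
  show ?case unfolding a
  proof (induction Y rule: pm_induct)
    case (single w c)
    obtain u v where w: "w = (u, v)" by (cases w)
    show ?case unfolding w pmul2_single_tens
      by (rule span_pm.span_pm_base) (use xy in \<open>blast intro: ig_mul_right ig_mul_left\<close>)
  qed (auto simp: pmul2_add_left intro: span_pm.intros)
qed (auto simp: pmul2_add_right pmul2_smult_right intro: span_pm.intros)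

lemma ker3_mul_right:
  assumes "X \<in> ker3 (ideal_gen G)" shows "pmul3 X Y \<in> ker3 (ideal_gen G)"
  using assms unfolding ker3_def
proof (induction X rule: span_pm.induct)
  case (span_pm_base a)
  then obtain x y z where a: "a = tens x (tens y z)" and xy: "x \<in> ideal_gen G \<or> y \<in> ideal_gen G \<or> z \<in> ideal_gen G" by blast
  show ?case unfolding a
  proof (induction Y rule: pm_induct)
    case (single w c)
    obtain u v t where w: "w = (u, v, t)" by (cases w)
    show ?case unfolding w pmul3_tens_single
      by (rule span_pm.span_pm_base) (use xy in \<open>blast intro: ig_mul_right ig_mul_left\<close>)
  qed (auto simp: pmul3_add_right intro: span_pm.intros)
qed (auto simp: pmul3_add_left pmul3_smult_left intro: span_pm.intros)

lemma ker3_mul_left: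
  assumes "X \<in> ker3 (ideal_gen G)" shows "pmul3 Y X \<in> ker3 (ideal_gen G)"
  using assms unfolding ker3_def
proof (induction X rule: span_pm.induct)
  case (span_pm_base a)
  then obtain x y z where a: "a = tens x (tens y z)" and xy: "x \<in> ideal_gen G \<or> y \<in> ideal_gen G \<or> z \<in> ideal_gen G" by blast
  show ?case unfolding a
  proof (induction Y rule: pm_induct)
    case (single w c)
    obtain u v t where w: "w = (u, v, t)" by (cases w)
    show ?case unfolding w pmul3_single_tens
      by (rule span_pm.span_pm_base) (use xy in \<open>blast intro: ig_mul_right ig_mul_left\<close>)
  qed (auto simp: pmul3_add_left intro: span_pm.intros)
qed (auto simp: pmul3_add_right pmul3_smult_right intro: span_pm.intros)


lemma pmul2_assoc: "pmul2 (pmul2 f g) h = pmul2 f (pmul2 g h)"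
proof (induction f rule: pm_induct)
  case (single w1 c1)
  then show ?case
  proof (induction g rule: pm_induct)
    case (single w2 c2)
    then show ?case by (induction h rule: pm_induct) (simp_all add: pmul2_add_right mult.assoc)
  qed (simp_all add: pmul2_add_left pmul2_add_right)
qed (simp_all add: pmul2_add_left)

lemma pmul2_one_left [simp]: "pmul2 (tens (wd []) (wd [])) f = f"
  by (induction f rule: pm_induct) (simp_all add: wd_single pmul2_add_right)
lemma pmul2_one_right [simp]: "pmul2 f (tens (wd []) (wd [])) = f"
  by (induction f rule: pm_induct) (simp_all add: wd_single pmul2_add_left)

lemma pmul3_single_gen: "pmul3 (Poly_Mapping.single u x) (Poly_Mapping.single v y) = Poly_Mapping.single (fst u @ fst v, fst (snd u) @ fst (snd v), snd (snd u) @ snd (snd v)) (x*y)"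
  by (simp add: pmul3_def)

lemma pmul3_assoc: "pmul3 (pmul3 f g) h = pmul3 f (pmul3 g h)"
proof (induction f rule: pm_induct)
  case (single w1 c1)
  then show ?case
  proof (induction g rule: pm_induct)
    case (single w2 c2)
    then show ?case by (induction h rule: pm_induct) (simp_all add: pmul3_add_right mult.assoc pmul3_single_gen)
  qed (simp_all add: pmul3_add_left pmul3_add_right)
qed (simp_all add: pmul3_add_left)

definition Xf :: "'k::field \<Rightarrow> ('a option list \<Rightarrow>\<^sub>0 'k) \<Rightarrow> ('a option list \<Rightarrow>\<^sub>0 'k)" where
  "Xf k a = a + smult_pm k (pmul q6 a) - pmul a q6"
definition Tf :: "'k::field \<Rightarrow> ('a option list \<Rightarrow>\<^sub>0 'k) \<Rightarrow> ('a option list \<times> 'a option list \<Rightarrow>\<^sub>0 'k)" where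
  "Tf k a = tens (Xf k a) one6 + tens one6 (Xf k a) + smult_pm (1 - k) (tens (pmul q6 a) q6)
            + smult_pm (1 - k) (tens q6 (pmul q6 a))"
definition Sf :: "'k::field \<Rightarrow> ('a option list \<Rightarrow>\<^sub>0 'k) \<Rightarrow> ('a option list \<Rightarrow>\<^sub>0 'k)" where
  "Sf k a = smult_pm (- (1 / k)) a - smult_pm k (pmul q6 a) + smult_pm (1 / k) (pmul a q6)"

definition Dl :: "'k::field \<Rightarrow> 'a option \<Rightarrow> ('a option list \<times> 'a option list \<Rightarrow>\<^sub>0 'k)" where
  "Dl k l = (case l of None \<Rightarrow> tens q6 q6 | Some x \<Rightarrow> Tf k (wd [Some x]))"
definition Sl :: "'k::field \<Rightarrow> 'a option \<Rightarrow> ('a option list \<Rightarrow>\<^sub>0 'k)" where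
  "Sl k l = (case l of None \<Rightarrow> one6 - q6 | Some x \<Rightarrow> Sf k (wd [Some x]))"
definition el :: "'a option \<Rightarrow> 'k::field" where
  "el l = (case l of None \<Rightarrow> 1 | Some x \<Rightarrow> 0)"

primrec Dw :: "'k::field \<Rightarrow> 'a option list \<Rightarrow> ('a option list \<times> 'a option list \<Rightarrow>\<^sub>0 'k)" where
  "Dw k [] = tens one6 one6"
| "Dw k (l # w) = pmul2 (Dl k l) (Dw k w)"
primrec Sw :: "'k::field \<Rightarrow> 'a option list \<Rightarrow> ('a option list \<Rightarrow>\<^sub>0 'k)" where
  "Sw k [] = one6"
| "Sw k (l # w) = pmul (Sw k w) (Sl k l)"
primrec ew :: "'a option list \<Rightarrow> 'k::field" where
  "ew [] = 1"
| "ew (l # w) = el l * ew w"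

definition Dm :: "'k::field \<Rightarrow> ('a option list \<Rightarrow>\<^sub>0 'k) \<Rightarrow> ('a option list \<times> 'a option list \<Rightarrow>\<^sub>0 'k)" where
  "Dm k = lext (Dw k)"
definition Sm :: "'k::field \<Rightarrow> ('a option list \<Rightarrow>\<^sub>0 'k) \<Rightarrow> ('a option list \<Rightarrow>\<^sub>0 'k)" where
  "Sm k = lext (Sw k)"
definition em :: "('a option list \<Rightarrow>\<^sub>0 'k::field) \<Rightarrow> 'k" where
  "em f = Poly_Mapping.lookup (lext (\<lambda>w. Poly_Mapping.single () (ew w)) f) ()"

lemma Dw_append: "Dw k (u @ v) = pmul2 (Dw k u) (Dw k v)"
  by (induction u) (simp_all add: pmul2_assoc)
lemma Sw_append: "Sw k (u @ v) = pmul (Sw k v) (Sw k u)"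
  by (induction u) (simp_all add: pmul_assoc)
lemma ew_append: "ew (u @ v) = ew u * ew (v :: 'a option list) "
  by (induction u) (simp_all)

lemma Dm_single [simp]: "Dm k (Poly_Mapping.single w c) = smult_pm c (Dw k w)"
  by (simp add: Dm_def)
lemma Sm_single [simp]: "Sm k (Poly_Mapping.single w c) = smult_pm c (Sw k w)"
  by (simp add: Sm_def)
lemma em_single [simp]: "em (Poly_Mapping.single w c) = c * ew w"
  by (simp add: em_def)
lemma Dm_wd [simp]: "Dm k (wd w) = Dw k w"
  by (simp add: Dm_def)
lemma Sm_wd [simp]: "Sm k (wd w) = Sw k w"
  by (simp add: Sm_def)
lemma em_wd [simp]: "em (wd w) = ew w"
  by (simp add: em_def)

lemma Dm_add: "Dm k (a + b) = Dm k a + Dm k b" by (simp add: Dm_def lext_add)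
lemma Dm_diff: "Dm k (a - b) = Dm k a - Dm k b" by (simp add: Dm_def lext_diff)
lemma Dm_smult: "Dm k (smult_pm c a) = smult_pm c (Dm k a)" by (simp add: Dm_def lext_smult)
lemma Dm_zero [simp]: "Dm k 0 = 0" by (simp add: Dm_def)
lemma Sm_add: "Sm k (a + b) = Sm k a + Sm k b" by (simp add: Sm_def lext_add)
lemma Sm_diff: "Sm k (a - b) = Sm k a - Sm k b" by (simp add: Sm_def lext_diff)
lemma Sm_smult: "Sm k (smult_pm c a) = smult_pm c (Sm k a)" by (simp add: Sm_def lext_smult)
lemma Sm_zero [simp]: "Sm k 0 = 0" by (simp add: Sm_def)
lemma em_add: "em (a + b) = em a + em b" by (simp add: em_def lext_add lookup_add)
lemma em_smult: "em (smult_pm c a) = c * em a" by (simp add: em_def lext_smult)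
lemma em_diff: "em (a - b) = em a - em b" by (simp add: em_def lext_diff lookup_minus)
lemma em_zero [simp]: "em 0 = 0" by (simp add: em_def)

lemma Dm_mult: "Dm k (pmul a b) = pmul2 (Dm k a) (Dm k b)"
proof (induction a rule: pm_induct)
  case (single w c)
  then show ?case
    by (induction b rule: pm_induct)
       (simp_all add: Dm_add pmul_add_right pmul2_add_right Dw_append pmul2_smult_left pmul2_smult_right mult.commute)
qed (simp_all add: Dm_add pmul_add_left pmul2_add_left)

lemma Sm_mult: "Sm k (pmul a b) = pmul (Sm k b) (Sm k a)"
proof (induction a rule: pm_induct)
  case (single w c)
  then show ?case
    by (induction b rule: pm_induct)
       (simp_all add: Sm_add pmul_add_right pmul_add_left Sw_append pmul_smult_left pmul_smult_right mult.commute smult_add_right)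
qed (simp_all add: Sm_add pmul_add_left pmul_add_right)

lemma em_mult: "em (pmul a b) = em a * em b"
proof (induction a rule: pm_induct)
  case (single w c)
  then show ?case
    by (induction b rule: pm_induct)
       (simp_all add: em_add pmul_add_right ew_append algebra_simps)
qed (simp_all add: em_add pmul_add_left algebra_simps)

lemma vs_smult: "vector_space (smult_pm :: 'k::field \<Rightarrow> ('w \<Rightarrow>\<^sub>0 'k) \<Rightarrow> _)"
  by (unfold_locales) (simp_all add: smult_add_right smult_add_left)
lemma vs_mult: "vector_space ((*) :: 'k::field \<Rightarrow> 'k \<Rightarrow> 'k)"
  by (unfold_locales) (simp_all add: algebra_simps)

lemma linear_Dm: "Vector_Spaces.linear smult_pm smult_pm (Dm k)"
  by (simp add: Vector_Spaces.linear_iff vs_smult Dm_add Dm_smult)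
lemma linear_Sm: "Vector_Spaces.linear smult_pm smult_pm (Sm k)"
  by (simp add: Vector_Spaces.linear_iff vs_smult Sm_add Sm_smult)
lemma linear_em: "Vector_Spaces.linear smult_pm (*) em"
  by (simp add: Vector_Spaces.linear_iff vs_smult vs_mult em_add em_smult)


fun nf :: "'a option list \<Rightarrow> 'a option list" where
  "nf [] = []"
| "nf (None # w) = None # filter (\<lambda>l. l \<noteq> None) w"
| "nf (Some x # w) = Some x # nf w"

definition Nm :: "('a option list \<Rightarrow>\<^sub>0 'k::comm_ring_1) \<Rightarrow> ('a option list \<Rightarrow>\<^sub>0 'k)" where
  "Nm = lext (\<lambda>w. wd (nf w))"
definition N2m :: "('a option list \<times> 'a option list \<Rightarrow>\<^sub>0 'k::comm_ring_1) \<Rightarrow> ('a option list \<times> 'a option list \<Rightarrow>\<^sub>0 'k)" where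
  "N2m = lext (\<lambda>(u, v). wd (nf u, nf v))"
definition N3m :: "('a option list \<times> 'a option list \<times> 'a option list \<Rightarrow>\<^sub>0 'k::comm_ring_1) \<Rightarrow> ('a option list \<times> 'a option list \<times> 'a option list \<Rightarrow>\<^sub>0 'k)" where
  "N3m = lext (\<lambda>(u, v, t). wd (nf u, nf v, nf t))"

lemma Nm_single [simp]: "Nm (Poly_Mapping.single w c) = Poly_Mapping.single (nf w) c"
  by (simp add: Nm_def wd_single)
lemma N2m_single [simp]: "N2m (Poly_Mapping.single (u, v) c) = Poly_Mapping.single (nf u, nf v) c"
  by (simp add: N2m_def wd_single)
lemma N3m_single [simp]: "N3m (Poly_Mapping.single (u, v, t) c) = Poly_Mapping.single (nf u, nf v, nf t) c"
  by (simp add: N3m_def wd_single)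
lemma Nm_0 [simp]: "Nm 0 = 0" by (simp add: Nm_def)
lemma N2m_0 [simp]: "N2m 0 = 0" by (simp add: N2m_def)
lemma N3m_0 [simp]: "N3m 0 = 0" by (simp add: N3m_def)
lemma Nm_add: "Nm (a + b) = Nm a + Nm b" by (simp add: Nm_def lext_add)
lemma Nm_diff: "Nm (a - b) = Nm a - Nm b" by (simp add: Nm_def lext_diff)
lemma Nm_smult: "Nm (smult_pm c a) = smult_pm c (Nm a)" by (simp add: Nm_def lext_smult)
lemma Nm_minus: "Nm (- a) = - Nm a" by (simp add: Nm_def lext_minus)
lemma N2m_add: "N2m (a + b) = N2m a + N2m b" by (simp add: N2m_def lext_add)
lemma N2m_diff: "N2m (a - b) = N2m a - N2m b" by (simp add: N2m_def lext_diff)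
lemma N2m_smult: "N2m (smult_pm c a) = smult_pm c (N2m a)" by (simp add: N2m_def lext_smult)
lemma N2m_minus: "N2m (- a) = - N2m a" by (simp add: N2m_def lext_minus)
lemma N3m_add: "N3m (a + b) = N3m a + N3m b" by (simp add: N3m_def lext_add)
lemma N3m_diff: "N3m (a - b) = N3m a - N3m b" by (simp add: N3m_def lext_diff)
lemma N3m_smult: "N3m (smult_pm c a) = smult_pm c (N3m a)" by (simp add: N3m_def lext_smult)
lemma N3m_minus: "N3m (- a) = - N3m a" by (simp add: N3m_def lext_minus)

locale qrel =
  fixes G :: "('a option list \<Rightarrow>\<^sub>0 'k::comm_ring_1) set"
  assumes qgen: "\<And>w. wd ([None] @ w @ [None]) - wd ([None] @ w) \<in> ideal_gen G"
begin

abbreviation "J \<equiv> ideal_gen G"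

lemma filter_step: "wd (None # u @ w) - wd (None # u @ filter (\<lambda>l. l \<noteq> None) w) \<in> J"
proof (induction w arbitrary: u)
  case Nil
  then show ?case by (simp add: ideal_gen_zero)
next
  case (Cons l w)
  show ?case
  proof (cases l)
    case None
    have 1: "wd (None # u @ None # w) - wd (None # u @ w) \<in> J"
    proof -
      have "pmul (wd ([None] @ u @ [None]) - wd ([None] @ u)) (wd w) \<in> J"
        by (rule ig_mul_right[OF qgen])
      then show ?thesis by (simp add: pmul_diff_left wd_single)
    qed
    have "wd (None # u @ w) - wd (None # u @ filter (\<lambda>l. l \<noteq> None) w) \<in> J" by (rule Cons.IH)
    from ideal_gen_add[OF 1 this] show ?thesis using None by simp
  next
    case (Some x)
    from Cons.IH[of "u @ [Some x]"] show ?thesis using Some by simp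
  qed
qed

lemma nf_word: "wd w - wd (nf w) \<in> J"
proof (induction w rule: nf.induct)
  case 1
  then show ?case by (simp add: ideal_gen_zero)
next
  case (2 w)
  then show ?case using filter_step[of "[]" w] by simp
next
  case (3 x w)
  have "pmul (wd [Some x]) (wd w - wd (nf w)) \<in> J" by (rule ig_mul_left[OF 3])
  then show ?case by (simp add: pmul_diff_right wd_single)
qed

lemma Nm_cong: "f - Nm f \<in> J"
proof (induction f rule: pm_induct)
  case zero
  then show ?case by (simp add: Nm_def ideal_gen_zero)
next
  case (single w c)
  have "smult_pm c (wd w - wd (nf w)) \<in> J" by (rule ideal_gen_smult[OF nf_word])
  then show ?case by (simp add: smult_diff_right wd_single)
next
  case (add a b)
  have "(a - Nm a) + (b - Nm b) \<in> J" by (rule ideal_gen_add[OF add])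
  then show ?case by (simp add: Nm_add algebra_simps)
qed

lemma Nm_zero_in: "Nm f = 0 \<Longrightarrow> f \<in> J"
  using Nm_cong[of f] by simp

lemma N2m_cong: "A - N2m A \<in> ker2 J"
proof (induction A rule: pm_induct)
  case zero
  then show ?case by (simp add: N2m_def ker2_zero)
next
  case (single w c)
  obtain u v where w: "w = (u, v)" by (cases w)
  have "Poly_Mapping.single (u, v) c - Poly_Mapping.single (nf u, nf v) c
      = smult_pm c (tens (wd u - wd (nf u)) (wd v) + tens (wd (nf u)) (wd v - wd (nf v)))"
    by (simp add: tens_diff_left tens_diff_right wd_single smult_diff_right)
  moreover have "\<dots> \<in> ker2 J"
    by (intro ker2_smult ker2_add ker2_tens_left ker2_tens_right nf_word)
  ultimately show ?case by (simp add: w)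
next
  case (add a b)
  have "(a - N2m a) + (b - N2m b) \<in> ker2 J" by (rule ker2_add[OF add])
  then show ?case by (simp add: N2m_add algebra_simps)
qed

lemma N2m_zero_in: "N2m A = 0 \<Longrightarrow> A \<in> ker2 J"
  using N2m_cong[of A] by simp

lemma N3m_cong: "A - N3m A \<in> ker3 J"
proof (induction A rule: pm_induct)
  case zero
  then show ?case by (simp add: N3m_def ker3_zero)
next
  case (single w c)
  obtain u v t where w: "w = (u, v, t)" by (cases w)
  have "Poly_Mapping.single (u, v, t) c - Poly_Mapping.single (nf u, nf v, nf t) c
      = smult_pm c (tens (wd u - wd (nf u)) (tens (wd v) (wd t)) + tens (wd (nf u)) (tens (wd v - wd (nf v)) (wd t))
          + tens (wd (nf u)) (tens (wd (nf v)) (wd t - wd (nf t))))"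
    by (simp add: tens_diff_left tens_diff_right wd_single smult_diff_right)
  moreover have "\<dots> \<in> ker3 J"
    by (intro ker3_smult ker3_add ker3_tens1 ker3_tens2 ker3_tens3 nf_word)
  ultimately show ?case by (simp add: w)
next
  case (add a b)
  have "(a - N3m a) + (b - N3m b) \<in> ker3 J" by (rule ker3_add[OF add])
  then show ?case by (simp add: N3m_add algebra_simps)
qed

lemma N3m_zero_in: "N3m A = 0 \<Longrightarrow> A \<in> ker3 J"
  using N3m_cong[of A] by simp

end


lemmas expand_simps = Xf_def Tf_def Sf_def Dl_def Sl_def wd_single el_def sigma6_def
  pmul_add_left pmul_add_right pmul_diff_left pmul_diff_right pmul_smult_left pmul_smult_right pmul_minus_left pmul_minus_right
  tens_add_left tens_add_right tens_diff_left tens_diff_right tens_smult_left tens_smult_right tens_minus_left tens_minus_right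
  tensL_add_left tensL_add_right tensL_diff_left tensL_diff_right tensL_smult_left tensL_smult_right
  pmul2_add_left pmul2_add_right pmul2_diff_left pmul2_diff_right pmul2_smult_left pmul2_smult_right
  smult_add_right smult_diff_right smult_minus_right
  lext_add lext_diff lext_smult lext_minus
  Nm_add Nm_diff Nm_smult Nm_minus N2m_add N2m_diff N2m_smult N2m_minus N3m_add N3m_diff N3m_smult N3m_minus
  Dm_add Dm_diff Dm_smult Sm_add Sm_diff Sm_smult em_add em_diff em_smult

definition dlt :: "'w \<Rightarrow> 'w \<Rightarrow> 'k::comm_ring_1" where "dlt w z = (1 when w = z)"
lemma when_dlt: "(c when w = z) = c * dlt w z"
  by (simp add: dlt_def when_def)

lemmas final_simps = lookup_add lookup_minus lookup_single when_dlt

context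
  fixes k :: "'k::field"
  assumes k: "k \<noteq> 0"
begin

lemma lie_D:
  "N2m (Tf k (wd [Some x, Some y] - wd [Some y, Some x] - wd [Some x, Some y, None] + wd [Some y, Some x, None]
          + smult_pm k (wd [Some x, None, Some y]) - smult_pm k (wd [Some y, None, Some x]))
        - Dm k (wd [Some x, Some y] - wd [Some y, Some x] - wd [Some x, Some y, None] + wd [Some y, Some x, None]
          + smult_pm k (wd [Some x, None, Some y]) - smult_pm k (wd [Some y, None, Some x]))) = 0"
  apply (simp add: expand_simps k)
  apply (rule poly_mapping_eqI)
  apply (simp add: final_simps)
  apply (simp add: algebra_simps)?
  done

lemma lie_S:
  "Nm (Sf k (wd [Some x, Some y] - wd [Some y, Some x] - wd [Some x, Some y, None] + wd [Some y, Some x, None]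
          + smult_pm k (wd [Some x, None, Some y]) - smult_pm k (wd [Some y, None, Some x]))
        - Sm k (wd [Some x, Some y] - wd [Some y, Some x] - wd [Some x, Some y, None] + wd [Some y, Some x, None]
          + smult_pm k (wd [Some x, None, Some y]) - smult_pm k (wd [Some y, None, Some x]))) = 0"
  apply (simp add: expand_simps k)
  apply (rule poly_mapping_eqI)
  apply (simp add: final_simps)
  apply (simp add: algebra_simps)?
  done

lemma anti1_letter:
  "Nm (lext (\<lambda>(u, v). pmul (Sm k (wd u)) (wd v)) (Dl k l)) = 0"
  by (cases l) (simp_all add: expand_simps k, (rule poly_mapping_eqI, simp add: final_simps, (simp add: algebra_simps)?)+)

lemma anti2_letter:
  "Nm (lext (\<lambda>(u, v). pmul (wd u) (Sm k (wd v))) (Dl k l)) = 0"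
  by (cases l) (simp_all add: expand_simps k, (rule poly_mapping_eqI, simp add: final_simps, (simp add: algebra_simps)?)+)

lemma coas_letter:
  "N3m (lext (\<lambda>(u, v). tensL (Dm k (wd u)) (wd v)) (Dl k l) - lext (\<lambda>(u, v). tens (wd u) (Dm k (wd v))) (Dl k l)) = 0"
  by (cases l) (simp_all add: expand_simps k, (rule poly_mapping_eqI, simp add: final_simps, (simp add: algebra_simps)?)+)

lemma cou1_letter:
  "Nm (lext (\<lambda>(u, v). smult_pm (em (wd u)) (wd v)) (Dl k l) - sigma6 (wd [l])) = 0"
  by (cases l) (simp_all add: expand_simps k, (rule poly_mapping_eqI, simp add: final_simps, (simp add: algebra_simps)?)+)

lemma cou2_letter:
  "Nm (lext (\<lambda>(u, v). smult_pm (em (wd v)) (wd u)) (Dl k l) - sigma6 (wd [l])) = 0"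
  by (cases l) (simp_all add: expand_simps k, (rule poly_mapping_eqI, simp add: final_simps, (simp add: algebra_simps)?)+)

end


lemma Dw_single_letter [simp]: "Dw k [l] = Dl k l"
  by simp
lemma Sw_single_letter [simp]: "Sw k [l] = Sl k l"
  by simp

lemma wd_cons: "wd (l # w) = pmul (wd [l]) (wd w)"
  by (simp add: wd_single)
lemma wd_append: "wd (u @ w) = pmul (wd u) (wd w)"
  by (simp add: wd_single)

context qrel
begin

lemma qaq: "pmul q6 (pmul a q6) - pmul q6 a \<in> J"
proof (induction a rule: pm_induct)
  case zero
  then show ?case by (simp add: ideal_gen_zero)
next
  case (single w c)
  have "smult_pm c (wd ([None] @ w @ [None]) - wd ([None] @ w)) \<in> J"
    by (rule ideal_gen_smult[OF qgen])
  then show ?case by (simp add: wd_single smult_diff_right)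
next
  case (add a b)
  from ideal_gen_add[OF add] show ?case
    by (simp add: pmul_add_left pmul_add_right algebra_simps)
qed

lemma qq: "pmul q6 q6 - q6 \<in> J"
  using qgen[of "[]"] by (simp add: wd_single)

lemma sigma_add: "sigma6 (a + b) = sigma6 a + sigma6 b"
  by (simp add: sigma6_def pmul_add_left pmul_add_right algebra_simps)
lemma sigma_smult: "sigma6 (smult_pm c a) = smult_pm c (sigma6 a)"
  by (simp add: sigma6_def pmul_smult_left pmul_smult_right smult_add_right smult_diff_right)

lemma sigma_mult: "pmul (sigma6 a) (sigma6 b) - sigma6 (pmul a b) \<in> J"
proof -
  have eq: "pmul (sigma6 a) (sigma6 b) - sigma6 (pmul a b)
    = pmul (pmul q6 (pmul a q6) - pmul q6 a) b - (pmul q6 (pmul (pmul a b) q6) - pmul q6 (pmul a b))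
      - pmul a (pmul (pmul q6 q6 - q6) b) + pmul a (pmul q6 (pmul b q6) - pmul q6 b)"
    by (simp add: sigma6_def pmul_add_left pmul_add_right pmul_diff_left pmul_diff_right pmul_assoc algebra_simps)
  show ?thesis unfolding eq
    by (intro ideal_gen_add ig_diff ig_mul_right ig_mul_left qaq qq)
qed

lemma PaP: "pmul (one6 - q6) (pmul a (one6 - q6)) - pmul a (one6 - q6) \<in> J"
proof -
  have eq: "pmul (one6 - q6) (pmul a (one6 - q6)) - pmul a (one6 - q6) = pmul q6 (pmul a q6) - pmul q6 a"
    by (simp add: pmul_diff_left pmul_diff_right algebra_simps)
  show ?thesis unfolding eq by (rule qaq)
qed

lemma QAQ: "pmul2 (tens q6 q6) (pmul2 A (tens q6 q6)) - pmul2 (tens q6 q6) A \<in> ker2 J"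
proof (induction A rule: pm_induct)
  case zero
  then show ?case by (simp add: ker2_zero)
next
  case (single w c)
  obtain u v where w: "w = (u, v)" by (cases w)
  have "smult_pm c (tens (wd ([None] @ u @ [None]) - wd ([None] @ u)) (wd ([None] @ v @ [None]))
         + tens (wd ([None] @ u)) (wd ([None] @ v @ [None]) - wd ([None] @ v))) \<in> ker2 J"
    by (intro ker2_smult ker2_add ker2_tens_left ker2_tens_right qgen)
  then show ?case
    by (simp add: w wd_single smult_add_right smult_diff_right tens_diff_left tens_diff_right)
next
  case (add a b)
  from ker2_add[OF add] show ?case
    by (simp add: pmul2_add_left pmul2_add_right algebra_simps)
qed

end

lemma Xf_J: "a \<in> ideal_gen G \<Longrightarrow> Xf k a \<in> ideal_gen G"
  unfolding Xf_def by (intro ig_diff ideal_gen_add ideal_gen_smult ig_mul_left ig_mul_right)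
lemma Tf_J: "a \<in> ideal_gen G \<Longrightarrow> Tf k a \<in> ker2 (ideal_gen G)"
  unfolding Tf_def
  by (intro ker2_add ker2_smult ker2_tens_left ker2_tens_right Xf_J ig_mul_left)
lemma Sf_J: "a \<in> ideal_gen G \<Longrightarrow> Sf k a \<in> ideal_gen G"
  unfolding Sf_def by (intro ig_diff ideal_gen_add ideal_gen_smult ig_mul_left ig_mul_right)

lemma Xf_diff: "Xf k (a - b) = Xf k a - Xf k b"
  by (simp add: Xf_def pmul_diff_left pmul_diff_right smult_diff_right algebra_simps)
lemma Xf_smult: "Xf k (smult_pm c a) = smult_pm c (Xf k a)"
  by (simp add: Xf_def pmul_smult_left pmul_smult_right smult_diff_right smult_add_right mult.commute)
lemma Tf_diff: "Tf k (a - b) = Tf k a - Tf k b"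
  by (simp add: Tf_def Xf_diff pmul_diff_right tens_diff_left tens_diff_right smult_diff_right algebra_simps)
lemma Tf_smult: "Tf k (smult_pm c a) = smult_pm c (Tf k a)"
  by (simp add: Tf_def Xf_smult pmul_smult_right tens_smult_left tens_smult_right smult_add_right mult.commute)
lemma Sf_diff: "Sf k (a - b) = Sf k a - Sf k b"
  by (simp add: Sf_def pmul_diff_left pmul_diff_right smult_diff_right algebra_simps)
lemma Sf_smult: "Sf k (smult_pm c a) = smult_pm c (Sf k a)"
  by (simp add: Sf_def pmul_smult_left pmul_smult_right smult_diff_right smult_add_right mult.commute)

lemma qrel_env6: "qrel (env6_gens scale br k)"
  by unfold_locales (rule ideal_gen_base, unfold env6_gens_def, blast)


definition Gx :: "'k::field \<Rightarrow> 'a \<Rightarrow> 'a \<Rightarrow> ('a option list \<Rightarrow>\<^sub>0 'k)" where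
  "Gx k x y = wd [Some x, Some y] - wd [Some y, Some x] - wd [Some x, Some y, None] + wd [Some y, Some x, None]
          + smult_pm k (wd [Some x, None, Some y]) - smult_pm k (wd [Some y, None, Some x])"

lemma gens_cases:
  assumes "g \<in> env6_gens scale br k"
  obtains (lin) x y where "g = wd [Some (x + y)] - wd [Some x] - wd [Some y]"
  | (sc) c x where "g = wd [Some (scale c x)] - smult_pm c (wd [Some x])"
  | (q) w where "g = wd ([None] @ w @ [None]) - wd ([None] @ w)"
  | (lie) x y where "g = wd [Some (br x y)] - Gx k x y"
proof -
  have "g = wd [Some (br x y)] - Gx k x y" if
    "g = wd [Some (br x y)] - wd [Some x, Some y] + wd [Some y, Some x]
        + wd [Some x, Some y, None] - wd [Some y, Some x, None]
        - smult_pm k (wd [Some x, None, Some y]) + smult_pm k (wd [Some y, None, Some x])" for x y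
    using that by (simp add: Gx_def algebra_simps)
  with assms that show ?thesis unfolding env6_gens_def by blast
qed

context
  fixes scale :: "'k::field \<Rightarrow> 'a::ab_group_add \<Rightarrow> 'a" and br :: "'a \<Rightarrow> 'a \<Rightarrow> 'a" and k :: 'k
  assumes k: "k \<noteq> 0"
begin

abbreviation "JJ \<equiv> ideal_gen (env6_gens scale br k)"

lemma gen_in: "g \<in> env6_gens scale br k \<Longrightarrow> g \<in> JJ"
  by (rule ideal_gen_base)

lemma D_gen: assumes g: "g \<in> env6_gens scale br k" shows "Dm k g \<in> ker2 JJ"
  using g
proof (cases rule: gens_cases)
  case (lin x y)
  have "Dm k g = Tf k g" by (simp add: lin Dm_diff Dl_def Tf_diff)
  then show ?thesis using Tf_J[OF gen_in[OF g]] by simp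
next
  case (sc c x)
  have "Dm k g = Tf k g" by (simp add: sc Dm_diff Dm_smult Dl_def Tf_diff Tf_smult)
  then show ?thesis using Tf_J[OF gen_in[OF g]] by simp
next
  case (q w)
  have "Dm k g = pmul2 (tens q6 q6) (pmul2 (Dw k w) (tens q6 q6)) - pmul2 (tens q6 q6) (Dw k w)"
    by (simp add: q Dm_diff Dw_append Dl_def)
  then show ?thesis using qrel.QAQ[OF qrel_env6] by simp
next
  case (lie x y)
  have "Dm k g = Tf k g + (Tf k (Gx k x y) - Dm k (Gx k x y))"
    by (simp add: lie Dm_diff Dl_def Tf_diff)
  moreover have "Tf k (Gx k x y) - Dm k (Gx k x y) \<in> ker2 JJ"
    by (rule qrel.N2m_zero_in[OF qrel_env6]) (unfold Gx_def, rule lie_D[OF k])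
  ultimately show ?thesis using Tf_J[OF gen_in[OF g]] by (simp add: ker2_add)
qed

lemma D_ker: "a \<in> JJ \<Longrightarrow> Dm k a \<in> ker2 JJ"
proof (induction a rule: ideal_gen.induct)
  case (ideal_gen_base g)
  then show ?case by (rule D_gen)
next
  case ideal_gen_zero
  then show ?case by (simp add: ker2_zero)
next
  case (ideal_gen_add a b)
  then show ?case by (simp add: Dm_add ker2_add)
next
  case (ideal_gen_smult a c)
  then show ?case by (simp add: Dm_smult ker2_smult)
next
  case (ideal_gen_mult a u v)
  then show ?case by (simp add: Dm_mult ker2_mul_left ker2_mul_right)
qed

lemma S_gen: assumes g: "g \<in> env6_gens scale br k" shows "Sm k g \<in> JJ"
  using g
proof (cases rule: gens_cases)
  case (lin x y)
  have "Sm k g = Sf k g" by (simp add: lin Sm_diff Sl_def Sf_diff)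
  then show ?thesis using Sf_J[OF gen_in[OF g]] by simp
next
  case (sc c x)
  have "Sm k g = Sf k g" by (simp add: sc Sm_diff Sm_smult Sl_def Sf_diff Sf_smult)
  then show ?thesis using Sf_J[OF gen_in[OF g]] by simp
next
  case (q w)
  have "Sm k g = pmul (one6 - q6) (pmul (Sw k w) (one6 - q6)) - pmul (Sw k w) (one6 - q6)"
    by (simp add: q Sm_diff Sw_append Sl_def pmul_assoc)
  then show ?thesis using qrel.PaP[OF qrel_env6] by simp
next
  case (lie x y)
  have "Sm k g = Sf k g + (Sf k (Gx k x y) - Sm k (Gx k x y))"
    by (simp add: lie Sm_diff Sl_def Sf_diff)
  moreover have "Sf k (Gx k x y) - Sm k (Gx k x y) \<in> JJ"
    by (rule qrel.Nm_zero_in[OF qrel_env6]) (unfold Gx_def, rule lie_S[OF k])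
  ultimately show ?thesis using Sf_J[OF gen_in[OF g]] by (simp add: ideal_gen_add)
qed

lemma S_ker: "a \<in> JJ \<Longrightarrow> Sm k a \<in> JJ"
proof (induction a rule: ideal_gen.induct)
  case (ideal_gen_base g)
  then show ?case by (rule S_gen)
next
  case ideal_gen_zero
  then show ?case by (simp add: ideal_gen.ideal_gen_zero)
next
  case (ideal_gen_add a b)
  then show ?case by (simp add: Sm_add ideal_gen.ideal_gen_add)
next
  case (ideal_gen_smult a c)
  then show ?case by (simp add: Sm_smult ideal_gen.ideal_gen_smult)
next
  case (ideal_gen_mult a u v)
  then show ?case by (simp add: Sm_mult ig_mul_left ig_mul_right)
qed

lemma e_gen: assumes g: "g \<in> env6_gens scale br k" shows "em g = 0"
  using g
proof (cases rule: gens_cases)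
  case (lin x y)
  then show ?thesis by (simp add: em_diff el_def)
next
  case (sc c x)
  then show ?thesis by (simp add: em_diff em_smult el_def)
next
  case (q w)
  then show ?thesis by (simp add: em_diff ew_append el_def)
next
  case (lie x y)
  then show ?thesis by (simp add: em_diff em_add em_smult el_def Gx_def)
qed

lemma e_ker: "a \<in> JJ \<Longrightarrow> em a = 0"
proof (induction a rule: ideal_gen.induct)
  case (ideal_gen_base g)
  then show ?case by (rule e_gen)
next
  case (ideal_gen_mult a u v)
  then show ?case by (simp add: em_mult)
qed (simp_all add: em_add em_smult)

end


lemma tensL_pmul: "tensL (pmul2 A B) (pmul c d) = pmul3 (tensL A c) (tensL B d)"
proof (induction A rule: pm_induct)
  case (single w1 c1)
  show ?case
  proof (induction B rule: pm_induct)
    case (single w2 c2)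
    show ?case
    proof (induction c rule: pm_induct)
      case (single w3 c3)
      show ?case
        by (induction d rule: pm_induct)
           (simp_all add: tensL_add_right pmul3_add_right pmul_add_right pmul3_single_gen mult_ac)
    qed (simp_all add: tensL_add_right pmul3_add_left pmul_add_left)
  qed (simp_all add: pmul2_add_right tensL_add_left pmul3_add_right)
qed (simp_all add: pmul2_add_left tensL_add_left pmul3_add_left)

lemma tens_pmul3: "tens (pmul a b) (pmul2 C E) = pmul3 (tens a C) (tens b E)"
proof (induction a rule: pm_induct)
  case (single w1 c1)
  show ?case
  proof (induction b rule: pm_induct)
    case (single w2 c2)
    show ?case
    proof (induction C rule: pm_induct)
      case (single w3 c3)
      show ?case
        by (induction E rule: pm_induct)
           (simp_all add: tens_add_right pmul3_add_right pmul2_add_right pmul3_single_gen mult_ac)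
    qed (simp_all add: tens_add_right pmul3_add_left pmul2_add_left)
  qed (simp_all add: pmul_add_right tens_add_left pmul3_add_right)
qed (simp_all add: pmul_add_left tens_add_left pmul3_add_left)

lemma lext_case_single [simp]: "lext (\<lambda>(u, v). \<phi> u v) (Poly_Mapping.single (a, b) c) = smult_pm c (\<phi> a b)"
  by simp

lemma L1_mult:
  "lext (\<lambda>(u, v). tensL (Dm k (wd u)) (wd v)) (pmul2 A B)
   = pmul3 (lext (\<lambda>(u, v). tensL (Dm k (wd u)) (wd v)) A) (lext (\<lambda>(u, v). tensL (Dm k (wd u)) (wd v)) B)"
proof (induction A rule: pm_induct)
  case (single w c)
  obtain a b where w: "w = (a, b)" by (cases w)
  show ?case
  proof (induction B rule: pm_induct)
    case (single w' c')
    obtain a' b' where w': "w' = (a', b')" by (cases w')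
    show ?case
      by (simp add: w w' Dw_append wd_append tensL_pmul tensL_smult_left pmul3_smult_left pmul3_smult_right mult.commute)
  qed (simp_all add: pmul2_add_right lext_add pmul3_add_right)
qed (simp_all add: pmul2_add_left lext_add pmul3_add_left)

lemma L2_mult:
  "lext (\<lambda>(u, v). tens (wd u) (Dm k (wd v))) (pmul2 A B)
   = pmul3 (lext (\<lambda>(u, v). tens (wd u) (Dm k (wd v))) A) (lext (\<lambda>(u, v). tens (wd u) (Dm k (wd v))) B)"
proof (induction A rule: pm_induct)
  case (single w c)
  obtain a b where w: "w = (a, b)" by (cases w)
  show ?case
  proof (induction B rule: pm_induct)
    case (single w' c')
    obtain a' b' where w': "w' = (a', b')" by (cases w')
    show ?case
      by (simp add: w w' Dw_append wd_append tens_pmul3 pmul3_smult_left pmul3_smult_right mult.commute)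
  qed (simp_all add: pmul2_add_right lext_add pmul3_add_right)
qed (simp_all add: pmul2_add_left lext_add pmul3_add_left)

lemma E1_mult:
  "lext (\<lambda>(u, v). smult_pm (em (wd u)) (wd v)) (pmul2 A B)
   = pmul (lext (\<lambda>(u, v). smult_pm (em (wd u)) (wd v)) A) (lext (\<lambda>(u, v). smult_pm (em (wd u)) (wd v)) B)"
proof (induction A rule: pm_induct)
  case (single w c)
  obtain a b where w: "w = (a, b)" by (cases w)
  show ?case
  proof (induction B rule: pm_induct)
    case (single w' c')
    obtain a' b' where w': "w' = (a', b')" by (cases w')
    show ?case
      by (simp add: w w' ew_append wd_single mult_ac)
  qed (simp_all add: pmul2_add_right lext_add pmul_add_right)
qed (simp_all add: pmul2_add_left lext_add pmul_add_left)

lemma E2_mult: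
  "lext (\<lambda>(u, v). smult_pm (em (wd v)) (wd u)) (pmul2 A B)
   = pmul (lext (\<lambda>(u, v). smult_pm (em (wd v)) (wd u)) A) (lext (\<lambda>(u, v). smult_pm (em (wd v)) (wd u)) B)"
proof (induction A rule: pm_induct)
  case (single w c)
  obtain a b where w: "w = (a, b)" by (cases w)
  show ?case
  proof (induction B rule: pm_induct)
    case (single w' c')
    obtain a' b' where w': "w' = (a', b')" by (cases w')
    show ?case
      by (simp add: w w' ew_append wd_single mult_ac)
  qed (simp_all add: pmul2_add_right lext_add pmul_add_right)
qed (simp_all add: pmul2_add_left lext_add pmul_add_left)


lemma M1_mult:
  "lext (\<lambda>(u, v). pmul (Sm k (wd u)) (wd v)) (pmul2 A B)
   = lext (\<lambda>(u, v). pmul (Sm k (wd u)) (pmul (lext (\<lambda>(u, v). pmul (Sm k (wd u)) (wd v)) A) (wd v))) B"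
proof (induction B rule: pm_induct)
  case (single w c)
  obtain a b where w: "w = (a, b)" by (cases w)
  show ?case
  proof (induction A rule: pm_induct)
    case (single w' c')
    obtain a' b' where w': "w' = (a', b')" by (cases w')
    show ?case
      by (simp add: w w' Sw_append wd_append pmul_smult_left pmul_smult_right pmul_assoc mult.commute)
  qed (simp_all add: w pmul2_add_left lext_add pmul_add_left pmul_add_right smult_add_right)
qed (simp_all add: pmul2_add_right lext_add)

lemma M2_mult:
  "lext (\<lambda>(u, v). pmul (wd u) (Sm k (wd v))) (pmul2 A B)
   = lext (\<lambda>(u, v). pmul (wd u) (pmul (lext (\<lambda>(u, v). pmul (wd u) (Sm k (wd v))) B) (Sm k (wd v)))) A"
proof (induction A rule: pm_induct)
  case (single w c)
  obtain a b where w: "w = (a, b)" by (cases w)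
  show ?case
  proof (induction B rule: pm_induct)
    case (single w' c')
    obtain a' b' where w': "w' = (a', b')" by (cases w')
    show ?case
      by (simp add: w w' Sw_append wd_append pmul_smult_left pmul_smult_right pmul_assoc mult.commute)
  qed (simp_all add: w pmul2_add_right lext_add pmul_add_left pmul_add_right smult_add_right)
qed (simp_all add: pmul2_add_left lext_add)

lemma Phi_J: "z \<in> ideal_gen G \<Longrightarrow> lext (\<lambda>(u, v). pmul (Sm k (wd u)) (pmul z (wd v))) B \<in> ideal_gen G"
proof (induction B rule: pm_induct)
  case (single w c)
  obtain a b where w: "w = (a, b)" by (cases w)
  show ?case using single by (simp add: w ideal_gen_smult ig_mul_left ig_mul_right)
qed (simp_all add: lext_add ideal_gen_zero ideal_gen_add)

lemma Psi_J: "z \<in> ideal_gen G \<Longrightarrow> lext (\<lambda>(u, v). pmul (wd u) (pmul z (Sm k (wd v)))) A \<in> ideal_gen G"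
proof (induction A rule: pm_induct)
  case (single w c)
  obtain a b where w: "w = (a, b)" by (cases w)
  show ?case using single by (simp add: w ideal_gen_smult ig_mul_left ig_mul_right)
qed (simp_all add: lext_add ideal_gen_zero ideal_gen_add)

lemma em_Sl: "em (Sl k l) = 0"
  by (cases l) (simp_all add: Sl_def Sf_def em_diff em_add em_smult wd_single el_def)

context
  fixes scale :: "'k::field \<Rightarrow> 'a::ab_group_add \<Rightarrow> 'a" and br :: "'a \<Rightarrow> 'a \<Rightarrow> 'a" and k :: 'k
  assumes k: "k \<noteq> 0"
begin

lemma anti1_all:
  "lext (\<lambda>(u, v). pmul (Sm k (wd u)) (wd v)) (Dm k h) - smult_pm (em (Sm k h)) (wd []) \<in> JJ scale br k"
proof (induction h rule: pm_induct)
  case zero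
  then show ?case by (simp add: ideal_gen_zero)
next
  case (single w c)
  show ?case
  proof (cases w)
    case Nil
    then show ?thesis by (simp add: ideal_gen_zero wd_single)
  next
    case (Cons l w')
    have m: "lext (\<lambda>(u, v). pmul (Sm k (wd u)) (wd v)) (Dl k l) \<in> JJ scale br k"
      by (rule qrel.Nm_zero_in[OF qrel_env6], rule anti1_letter[OF k])
    have "lext (\<lambda>(u, v). pmul (Sm k (wd u)) (wd v)) (Dw k (l # w')) \<in> JJ scale br k"
      unfolding Dw.simps M1_mult by (rule Phi_J[OF m])
    then show ?thesis
      by (simp add: Cons lext_smult em_smult em_mult em_Sl ideal_gen_smult)
  qed
next
  case (add a b)
  from ideal_gen_add[OF add] show ?case
    by (simp add: Dm_add Sm_add em_add lext_add smult_add_left algebra_simps)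
qed

lemma anti2_all:
  "lext (\<lambda>(u, v). pmul (wd u) (Sm k (wd v))) (Dm k h) - smult_pm (em (Sm k h)) (wd []) \<in> JJ scale br k"
proof (induction h rule: pm_induct)
  case zero
  then show ?case by (simp add: ideal_gen_zero)
next
  case (single w c)
  show ?case
  proof (cases w rule: rev_exhaust)
    case Nil
    then show ?thesis by (simp add: ideal_gen_zero wd_single)
  next
    case (snoc w' l)
    have m: "lext (\<lambda>(u, v). pmul (wd u) (Sm k (wd v))) (Dl k l) \<in> JJ scale br k"
      by (rule qrel.Nm_zero_in[OF qrel_env6], rule anti2_letter[OF k])
    have "lext (\<lambda>(u, v). pmul (wd u) (Sm k (wd v))) (Dw k (w' @ [l])) \<in> JJ scale br k"
      unfolding Dw_append Dw_single_letter M2_mult by (rule Psi_J[OF m])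
    then show ?thesis
      by (simp add: snoc lext_smult em_smult em_mult em_Sl ideal_gen_smult Sw_append)
  qed
next
  case (add a b)
  from ideal_gen_add[OF add] show ?case
    by (simp add: Dm_add Sm_add em_add lext_add smult_add_left algebra_simps)
qed

lemma cou1_word:
  "lext (\<lambda>(u, v). smult_pm (em (wd u)) (wd v)) (Dw k w) - sigma6 (wd w) \<in> JJ scale br k"
proof (induction w)
  case Nil
  then show ?case by (simp add: ideal_gen_zero wd_single sigma6_def)
next
  case (Cons l w)
  let ?E = "lext (\<lambda>(u, v). smult_pm (em (wd u)) (wd v))"
  let ?a = "?E (Dl k l)" and ?b = "?E (Dw k w)" and ?sa = "sigma6 (wd [l])" and ?sb = "sigma6 (wd w)"
  have 1: "?a - ?sa \<in> JJ scale br k"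
    by (rule qrel.Nm_zero_in[OF qrel_env6], rule cou1_letter[OF k])
  have 2: "pmul ?sa ?sb - sigma6 (pmul (wd [l]) (wd w)) \<in> JJ scale br k"
    by (rule qrel.sigma_mult[OF qrel_env6])
  have eq: "?E (Dw k (l # w)) - sigma6 (wd (l # w))
     = pmul (?a - ?sa) ?b + pmul ?sa (?b - ?sb) + (pmul ?sa ?sb - sigma6 (pmul (wd [l]) (wd w)))"
    by (simp only: Dw.simps E1_mult wd_cons[of l w] pmul_diff_left pmul_diff_right) (simp add: algebra_simps)
  show ?case unfolding eq
    by (intro ideal_gen_add ig_mul_left ig_mul_right 1 2 Cons.IH)
qed

lemma cou2_word:
  "lext (\<lambda>(u, v). smult_pm (em (wd v)) (wd u)) (Dw k w) - sigma6 (wd w) \<in> JJ scale br k"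
proof (induction w)
  case Nil
  then show ?case by (simp add: ideal_gen_zero wd_single sigma6_def)
next
  case (Cons l w)
  let ?E = "lext (\<lambda>(u, v). smult_pm (em (wd v)) (wd u))"
  let ?a = "?E (Dl k l)" and ?b = "?E (Dw k w)" and ?sa = "sigma6 (wd [l])" and ?sb = "sigma6 (wd w)"
  have 1: "?a - ?sa \<in> JJ scale br k"
    by (rule qrel.Nm_zero_in[OF qrel_env6], rule cou2_letter[OF k])
  have 2: "pmul ?sa ?sb - sigma6 (pmul (wd [l]) (wd w)) \<in> JJ scale br k"
    by (rule qrel.sigma_mult[OF qrel_env6])
  have eq: "?E (Dw k (l # w)) - sigma6 (wd (l # w))
     = pmul (?a - ?sa) ?b + pmul ?sa (?b - ?sb) + (pmul ?sa ?sb - sigma6 (pmul (wd [l]) (wd w)))"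
    by (simp only: Dw.simps E2_mult wd_cons[of l w] pmul_diff_left pmul_diff_right) (simp add: algebra_simps)
  show ?case unfolding eq
    by (intro ideal_gen_add ig_mul_left ig_mul_right 1 2 Cons.IH)
qed

lemma cou1_all:
  "lext (\<lambda>(u, v). smult_pm (em (wd u)) (wd v)) (Dm k h) - sigma6 h \<in> JJ scale br k"
proof (induction h rule: pm_induct)
  case zero
  then show ?case by (simp add: ideal_gen_zero sigma6_def)
next
  case (single w c)
  have "Poly_Mapping.single w c = smult_pm c (wd w)" by (simp add: wd_single)
  then have "sigma6 (Poly_Mapping.single w c) = smult_pm c (sigma6 (wd w))" by (simp add: qrel.sigma_smult[OF qrel_env6])
  then show ?case
    using ideal_gen_smult[OF cou1_word[of w], of c]
    by (simp add: lext_smult smult_diff_right)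
next
  case (add a b)
  from ideal_gen_add[OF add] show ?case
    by (simp add: Dm_add lext_add qrel.sigma_add[OF qrel_env6] algebra_simps)
qed

lemma cou2_all:
  "lext (\<lambda>(u, v). smult_pm (em (wd v)) (wd u)) (Dm k h) - sigma6 h \<in> JJ scale br k"
proof (induction h rule: pm_induct)
  case zero
  then show ?case by (simp add: ideal_gen_zero sigma6_def)
next
  case (single w c)
  have "Poly_Mapping.single w c = smult_pm c (wd w)" by (simp add: wd_single)
  then have "sigma6 (Poly_Mapping.single w c) = smult_pm c (sigma6 (wd w))" by (simp add: qrel.sigma_smult[OF qrel_env6])
  then show ?case
    using ideal_gen_smult[OF cou2_word[of w], of c]
    by (simp add: lext_smult smult_diff_right)
next
  case (add a b)
  from ideal_gen_add[OF add] show ?case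
    by (simp add: Dm_add lext_add qrel.sigma_add[OF qrel_env6] algebra_simps)
qed

lemma coas_word:
  "lext (\<lambda>(u, v). tensL (Dm k (wd u)) (wd v)) (Dw k w) - lext (\<lambda>(u, v). tens (wd u) (Dm k (wd v))) (Dw k w)
   \<in> ker3 (JJ scale br k)"
proof (induction w)
  case Nil
  then show ?case by (simp add: ker3_zero wd_single)
next
  case (Cons l w)
  let ?L1 = "lext (\<lambda>(u, v). tensL (Dm k (wd u)) (wd v))" and ?L2 = "lext (\<lambda>(u, v). tens (wd u) (Dm k (wd v)))"
  have 1: "?L1 (Dl k l) - ?L2 (Dl k l) \<in> ker3 (JJ scale br k)"
    by (rule qrel.N3m_zero_in[OF qrel_env6], rule coas_letter[OF k])
  have eq: "?L1 (Dw k (l # w)) - ?L2 (Dw k (l # w))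
     = pmul3 (?L1 (Dl k l) - ?L2 (Dl k l)) (?L1 (Dw k w)) + pmul3 (?L2 (Dl k l)) (?L1 (Dw k w) - ?L2 (Dw k w))"
    by (simp only: Dw.simps L1_mult L2_mult pmul3_diff_left pmul3_diff_right) (simp add: algebra_simps)
  show ?case unfolding eq
    by (intro ker3_add ker3_mul_left ker3_mul_right 1 Cons.IH)
qed

lemma coas_all:
  "lext (\<lambda>(u, v). tensL (Dm k (wd u)) (wd v)) (Dm k h) - lext (\<lambda>(u, v). tens (wd u) (Dm k (wd v))) (Dm k h)
   \<in> ker3 (JJ scale br k)"
proof (induction h rule: pm_induct)
  case zero
  then show ?case by (simp add: ker3_zero)
next
  case (single w c)
  show ?case using ker3_smult[OF coas_word[of w], of c]
    by (simp add: lext_smult smult_diff_right)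
next
  case (add a b)
  from ker3_add[OF add] show ?case
    by (simp add: Dm_add lext_add algebra_simps)
qed

end


theorem proposition4p1:
  fixes scale :: "'k::field \<Rightarrow> 'a::ab_group_add \<Rightarrow> 'a"
    and br :: "'a \<Rightarrow> 'a \<Rightarrow> 'a"
    and k :: 'k
  assumes "lie_algebra scale br"
    and "k \<noteq> 0"
  shows "\<exists>(D :: ('a option list \<Rightarrow>\<^sub>0 'k) \<Rightarrow> ('a option list \<times> 'a option list \<Rightarrow>\<^sub>0 'k))
            (e :: ('a option list \<Rightarrow>\<^sub>0 'k) \<Rightarrow> 'k)
            (S :: ('a option list \<Rightarrow>\<^sub>0 'k) \<Rightarrow> ('a option list \<Rightarrow>\<^sub>0 'k)).
     well_defined_maps (env6_ker scale br k) D e S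
   \<and> bialgebra_sigma_counit (env6_ker scale br k) D e sigma6
   \<and> antipode6_like (env6_ker scale br k) D e S
   \<and> D q6 - tens q6 q6 \<in> ker2 (env6_ker scale br k)
   \<and> (\<forall>x. D (lie6 x)
          - (tens (lie6 x + smult_pm k (wd [None, Some x]) - wd [Some x, None]) one6
             + tens one6 (lie6 x + smult_pm k (wd [None, Some x]) - wd [Some x, None])
             + smult_pm (1 - k) (tens (wd [None, Some x]) q6)
             + smult_pm (1 - k) (tens q6 (wd [None, Some x])))
          \<in> ker2 (env6_ker scale br k))
   \<and> e q6 = 1
   \<and> (\<forall>x. e (lie6 x) = 0)
   \<and> S q6 - (one6 - q6) \<in> env6_ker scale br k
   \<and> (\<forall>x. S (lie6 x)
          - (smult_pm (- (1 / k)) (lie6 x) - smult_pm k (wd [None, Some x])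
             + smult_pm (1 / k) (wd [Some x, None]))
          \<in> env6_ker scale br k)"
proof -
  note k = assms(2)
  have wdm: "well_defined_maps (env6_ker scale br k) (Dm k) em (Sm k)"
    unfolding well_defined_maps_def env6_ker_def
    by (intro conjI linear_Dm linear_em linear_Sm ballI D_ker[OF k] e_ker[OF k] S_ker[OF k])
  have bia: "bialgebra_sigma_counit (env6_ker scale br k) (Dm k) em sigma6"
    unfolding bialgebra_sigma_counit_def env6_ker_def
    apply (intro conjI allI)
    apply (simp add: pmul_assoc ideal_gen_zero)
    apply (simp add: ideal_gen_zero)
    apply (simp add: ideal_gen_zero)
    apply (rule coas_all[OF k])
    apply (rule cou1_all[OF k])
    apply (rule cou2_all[OF k])
    apply (simp add: Dm_mult ker2_zero)
    apply (simp add: ker2_zero)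
    apply (rule em_mult)
    apply simp
    done
  have ant: "antipode6_like (env6_ker scale br k) (Dm k) em (Sm k)"
    unfolding antipode6_like_def env6_ker_def
    apply (intro conjI allI)
    apply (rule anti1_all[OF k])
    apply (rule anti2_all[OF k])
    done
  have c1: "Dm k q6 - tens q6 q6 \<in> ker2 (env6_ker scale br k)" by (simp add: Dl_def ker2_zero)
  have c2: "Dm k (lie6 x)
          - (tens (lie6 x + smult_pm k (wd [None, Some x]) - wd [Some x, None]) one6
             + tens one6 (lie6 x + smult_pm k (wd [None, Some x]) - wd [Some x, None])
             + smult_pm (1 - k) (tens (wd [None, Some x]) q6)
             + smult_pm (1 - k) (tens q6 (wd [None, Some x])))
          \<in> ker2 (env6_ker scale br k)" for x
    by (simp add: Dl_def, simp add: Tf_def Xf_def ker2_zero wd_single)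
  have c3: "em q6 = 1" by (simp add: el_def)
  have c3': "em (lie6 x) = 0" for x by (simp add: el_def)
  have c4: "Sm k q6 - (one6 - q6) \<in> env6_ker scale br k" by (simp add: Sl_def env6_ker_def ideal_gen_zero)
  have c5: "Sm k (lie6 x)
          - (smult_pm (- (1 / k)) (lie6 x) - smult_pm k (wd [None, Some x])
             + smult_pm (1 / k) (wd [Some x, None]))
          \<in> env6_ker scale br k" for x
    by (simp add: Sl_def, simp add: Sf_def env6_ker_def ideal_gen_zero wd_single)
  show ?thesis
    apply (rule exI[of _ "Dm k"], rule exI[of _ em], rule exI[of _ "Sm k"])
    apply (intro conjI allI)
    apply (rule wdm bia ant c1 c2 c3 c3' c4 c5)+
    done
qed


end
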